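(* Let $M$ be a timelike surface in $\mathbb{R}^{n,1}$ with a canonical null direction with respect to a constant unit spacelike vector $Z$, and let $W$ be as below. Then $$\nabla^\perp_W\vec H=-\nabla^\perp_{Z^\top}\big(II(W,W)\big),\qquad |\vec H|^2=-\langle\nabla^\perp_W\vec H,Z^\perp\rangle,$$ and the Gaussian curvature satisfies $$K=|\vec H|^2-\langle II(W,W),II(Z^\top,Z^\top)\rangle.$$
   Context: $\mathbb{R}^{n,1}$ is $\mathbb{R}^{n+1}$ with the metric $-dx_1^2+dx_2^2+\dots+dx_{n+1}^2$. A surface is timelike if the induced metric has signature $(1,1)$; a vector $v$ is lightlike if $v\ne0$ and $\langle v,v\rangle=0$. For a constant vector $Z$, $Z=Z^\top+Z^\perp$ along $M$; $M$ has a canonical null direction with respect to $Z$ if $Z^\top$ is lightlike everywhere on $M$. $W$ is the unique lightlike tangent field with $\langle Z^\top,W\rangle=-1$. $II$ is the second fundamental form, $\nabla^\perp$ the normal connection, $\vec H=\frac12\operatorname{tr}_{\langle,\rangle}II$ the mean curvature vector (which equals $-II(Z^\top,W)$), $|\vec H|^2:=\langle\vec H,\vec H\rangle$, and $K$ the Gaussian curvature of $M$. *)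

theory Defs
  imports "HOL-Analysis.Analysis"
begin

text \<open>Minkowski space R^{n,1} is modelled as real \<times> real^'n: the first component is the
 time coordinate x_1, the second the space coordinates x_2..x_{n+1}.
 A surface is given by a local parametrisation X defined on an open set U of R^2 = real \<times> real.\<close>

type_synonym 'n mink = "real \<times> (real ^ 'n)"

definition mink :: "'n::finite mink \<Rightarrow> 'n mink \<Rightarrow> real" where
  "mink x y = - fst x * fst y + snd x \<bullet> snd y"

fun dd :: "(real \<times> real) list \<Rightarrow> (real \<times> real \<Rightarrow> 'a::real_normed_vector) \<Rightarrow> real \<times> real \<Rightarrow> 'a" where
  "dd [] f = f"
| "dd (h # hs) f = (\<lambda>p. frechet_derivative (dd hs f) (at p) h)"

definition smooth_on :: "(real \<times> real) set \<Rightarrow> (real \<times> real \<Rightarrow> 'a::real_normed_vector) \<Rightarrow> bool" where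
  "smooth_on U f \<longleftrightarrow> (\<forall>hs. \<forall>p\<in>U. dd hs f differentiable (at p))"

definition ebasis :: "nat \<Rightarrow> real \<times> real" where
  "ebasis i = (if i = 0 then (1, 0) else (0, 1))"

definition ctan :: "(real \<times> real \<Rightarrow> 'n::finite mink) \<Rightarrow> real \<times> real \<Rightarrow> nat \<Rightarrow> 'n mink" where
  "ctan X p i = frechet_derivative X (at p) (ebasis i)"

definition metric :: "(real \<times> real \<Rightarrow> 'n::finite mink) \<Rightarrow> real \<times> real \<Rightarrow> nat \<Rightarrow> nat \<Rightarrow> real" where
  "metric X p i j = mink (ctan X p i) (ctan X p j)"

definition gdet :: "(real \<times> real \<Rightarrow> 'n::finite mink) \<Rightarrow> real \<times> real \<Rightarrow> real" where
  "gdet X p = metric X p 0 0 * metric X p 1 1 - metric X p 0 1 * metric X p 1 0"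

definition ginv :: "(real \<times> real \<Rightarrow> 'n::finite mink) \<Rightarrow> real \<times> real \<Rightarrow> nat \<Rightarrow> nat \<Rightarrow> real" where
  "ginv X p i j =
     (if i = 0 \<and> j = 0 then metric X p 1 1 / gdet X p
      else if i = 1 \<and> j = 1 then metric X p 0 0 / gdet X p
      else - metric X p 0 1 / gdet X p)"

definition tangent_space :: "(real \<times> real \<Rightarrow> 'n::finite mink) \<Rightarrow> real \<times> real \<Rightarrow> 'n mink set" where
  "tangent_space X p = span {ctan X p 0, ctan X p 1}"

definition tproj :: "(real \<times> real \<Rightarrow> 'n::finite mink) \<Rightarrow> real \<times> real \<Rightarrow> 'n mink \<Rightarrow> 'n mink" where
  "tproj X p v = (\<Sum>i<2. \<Sum>j<2. (ginv X p i j * mink v (ctan X p j)) *\<^sub>R ctan X p i)"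

definition nproj :: "(real \<times> real \<Rightarrow> 'n::finite mink) \<Rightarrow> real \<times> real \<Rightarrow> 'n mink \<Rightarrow> 'n mink" where
  "nproj X p v = v - tproj X p v"

text \<open>Coordinates (a,b) of a tangent vector v = a \<partial>_0 X + b \<partial>_1 X.\<close>
definition coord :: "(real \<times> real \<Rightarrow> 'n::finite mink) \<Rightarrow> real \<times> real \<Rightarrow> 'n mink \<Rightarrow> real \<times> real" where
  "coord X p v = (\<Sum>i<2. \<Sum>j<2. (ginv X p i j * mink v (ctan X p j)) *\<^sub>R ebasis i)"

definition dirD :: "(real \<times> real \<Rightarrow> 'n::finite mink) \<Rightarrow> (real \<times> real \<Rightarrow> 'n mink) \<Rightarrow> real \<times> real \<Rightarrow> 'n mink \<Rightarrow> 'n mink" where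
  "dirD X F p v = frechet_derivative F (at p) (coord X p v)"

text \<open>Second fundamental form II(v,w) = (D_v w~)^\<perp>, computed from the second derivative of X.\<close>
definition II :: "(real \<times> real \<Rightarrow> 'n::finite mink) \<Rightarrow> real \<times> real \<Rightarrow> 'n mink \<Rightarrow> 'n mink \<Rightarrow> 'n mink" where
  "II X p v w = nproj X p
     (frechet_derivative (\<lambda>q. frechet_derivative X (at q) (coord X p w)) (at p) (coord X p v))"

definition Hvec :: "(real \<times> real \<Rightarrow> 'n::finite mink) \<Rightarrow> real \<times> real \<Rightarrow> 'n mink" where
  "Hvec X p = (1/2) *\<^sub>R (\<Sum>i<2. \<Sum>j<2. ginv X p i j *\<^sub>R II X p (ctan X p i) (ctan X p j))"

definition nabla_perp :: "(real \<times> real \<Rightarrow> 'n::finite mink) \<Rightarrow> (real \<times> real \<Rightarrow> 'n mink) \<Rightarrow> real \<times> real \<Rightarrow> 'n mink \<Rightarrow> 'n mink" where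
  "nabla_perp X \<xi> p v = nproj X p (dirD X \<xi> p v)"

text \<open>Intrinsic Gaussian curvature of the induced metric: Christoffel symbols,
 Riemann tensor R(\<partial>_i,\<partial>_j)\<partial>_k = R^l_ijk \<partial>_l with
 R(X,Y)Z = \<nabla>_X\<nabla>_Y Z - \<nabla>_Y\<nabla>_X Z - \<nabla>_[X,Y] Z, and K = g(R(\<partial>_0,\<partial>_1)\<partial>_1,\<partial>_0)/det g.\<close>
definition dmetric :: "(real \<times> real \<Rightarrow> 'n::finite mink) \<Rightarrow> real \<times> real \<Rightarrow> nat \<Rightarrow> nat \<Rightarrow> nat \<Rightarrow> real" where
  "dmetric X p i j l = frechet_derivative (\<lambda>q. metric X q j l) (at p) (ebasis i)"

definition christoffel :: "(real \<times> real \<Rightarrow> 'n::finite mink) \<Rightarrow> real \<times> real \<Rightarrow> nat \<Rightarrow> nat \<Rightarrow> nat \<Rightarrow> real" where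
  "christoffel X p k i j = (1/2) * (\<Sum>l<2. ginv X p k l *
      (dmetric X p i j l + dmetric X p j i l - dmetric X p l i j))"

definition riemann :: "(real \<times> real \<Rightarrow> 'n::finite mink) \<Rightarrow> real \<times> real \<Rightarrow> nat \<Rightarrow> nat \<Rightarrow> nat \<Rightarrow> nat \<Rightarrow> real" where
  "riemann X p l i j k =
     frechet_derivative (\<lambda>q. christoffel X q l j k) (at p) (ebasis i)
   - frechet_derivative (\<lambda>q. christoffel X q l i k) (at p) (ebasis j)
   + (\<Sum>m<2. christoffel X p l i m * christoffel X p m j k
             - christoffel X p l j m * christoffel X p m i k)"

definition gaussK :: "(real \<times> real \<Rightarrow> 'n::finite mink) \<Rightarrow> real \<times> real \<Rightarrow> real" where
  "gaussK X p = (\<Sum>l<2. riemann X p l 0 1 1 * metric X p l 0) / gdet X p"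

text \<open>Timelike surface: smooth parametrisation on an open set whose induced metric has
 signature (1,1), i.e. negative determinant (this also forces X to be an immersion).\<close>
definition timelike_surface :: "(real \<times> real) set \<Rightarrow> (real \<times> real \<Rightarrow> 'n::finite mink) \<Rightarrow> bool" where
  "timelike_surface U X \<longleftrightarrow> open U \<and> smooth_on U X \<and> (\<forall>p\<in>U. gdet X p < 0)"

definition lightlike :: "'n::finite mink \<Rightarrow> bool" where
  "lightlike v \<longleftrightarrow> v \<noteq> 0 \<and> mink v v = 0"

definition canonical_null_direction :: "(real \<times> real) set \<Rightarrow> (real \<times> real \<Rightarrow> 'n::finite mink) \<Rightarrow> 'n mink \<Rightarrow> bool" where
  "canonical_null_direction U X Z \<longleftrightarrow> (\<forall>p\<in>U. lightlike (tproj X p Z))"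

end

theory Submission
  imports Defs
begin


lemma norm_pair_le: "norm ((a::real), (b::real)) \<le> \<bar>a\<bar> + \<bar>b\<bar>"
  by (simp add: norm_Pair sqrt_sum_squares_le_sum_abs)

lemma mvt_strip:
  fixes f :: "real \<times> real \<Rightarrow> real" and x :: "real \<times> real"
  assumes df: "\<And>q. norm (q - x) < r \<Longrightarrow> (f has_derivative Df q) (at q)"
    and h: "0 < h" "2*h < r"
    and dir: "\<And>s. g s = f (x + (s, h)) - f (x + (s, 0))"
  shows "\<exists>\<xi>\<in>{0..h}. g h - g 0 = h * (Df (x + (\<xi>, h)) (1,0) - Df (x + (\<xi>, 0)) (1,0))"
proof -
  have der: "(g has_derivative (\<lambda>d. Df (x + (s, h)) (d,0) - Df (x + (s, 0)) (d,0))) (at s within {0..h})"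
    if "0 \<le> s" "s \<le> h" for s
  proof -
    have n1: "norm ((x + (s, h)) - x) < r" using norm_pair_le[of s h] that h by simp
    have n2: "norm ((x + (s, 0)) - x) < r" using norm_pair_le[of s 0] that h by simp
    have i1: "((\<lambda>s. x + (s, h)) has_derivative (\<lambda>d. (d, 0))) (at s within {0..h})"
      by (auto intro!: derivative_eq_intros)
    have i2: "((\<lambda>s. x + (s, 0)) has_derivative (\<lambda>d. (d, 0))) (at s within {0..h})"
      by (auto intro!: derivative_eq_intros)
    have c1: "((\<lambda>s. f (x + (s, h))) has_derivative (\<lambda>d. Df (x + (s, h)) (d,0))) (at s within {0..h})"
      using has_derivative_compose[OF i1 has_derivative_at_withinI[OF df[OF n1]]] by (simp add: o_def)
    have c2: "((\<lambda>s. f (x + (s, 0))) has_derivative (\<lambda>d. Df (x + (s, 0)) (d,0))) (at s within {0..h})"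
      using has_derivative_compose[OF i2 has_derivative_at_withinI[OF df[OF n2]]] by (simp add: o_def)
    have "((\<lambda>s. f (x + (s, h)) - f (x + (s, 0))) has_derivative (\<lambda>d. Df (x + (s, h)) (d,0) - Df (x + (s, 0)) (d,0))) (at s within {0..h})"
      by (rule has_derivative_diff[OF c1 c2])
    moreover have "g = (\<lambda>s. f (x + (s, h)) - f (x + (s, 0)))" using dir by auto
    ultimately show ?thesis by simp
  qed
  obtain \<xi> where \<xi>: "\<xi> \<in> {0..h}" and eq: "g h - g 0 = Df (x + (\<xi>, h)) (h,0) - Df (x + (\<xi>, 0)) (h,0)"
    using mvt_very_simple[of 0 h g "\<lambda>s d. Df (x + (s, h)) (d,0) - Df (x + (s, 0)) (d,0)"] der h by auto
  have n1: "norm ((x + (\<xi>, h)) - x) < r" using norm_pair_le[of \<xi> h] \<xi> h by simp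
  have n2: "norm ((x + (\<xi>, 0)) - x) < r" using norm_pair_le[of \<xi> 0] \<xi> h by simp
  have l1: "linear (Df (x + (\<xi>, h)))" using df[OF n1] has_derivative_linear by blast
  have l2: "linear (Df (x + (\<xi>, 0)))" using df[OF n2] has_derivative_linear by blast
  have "(h, 0::real) = h *\<^sub>R (1, 0)" by simp
  then have "Df (x + (\<xi>, h)) (h,0) = h * Df (x + (\<xi>, h)) (1,0)"
       "Df (x + (\<xi>, 0)) (h,0) = h * Df (x + (\<xi>, 0)) (1,0)"
    using linear_scale[OF l1, of h "(1,0)"] linear_scale[OF l2, of h "(1,0)"] by auto
  then show ?thesis using \<xi> eq by (auto simp: algebra_simps)
qed

lemma mvt_strip2:
  fixes f :: "real \<times> real \<Rightarrow> real" and x :: "real \<times> real"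
  assumes df: "\<And>q. norm (q - x) < r \<Longrightarrow> (f has_derivative Df q) (at q)"
    and h: "0 < h" "2*h < r"
    and dir: "\<And>s. g s = f (x + (h, s)) - f (x + (0, s))"
  shows "\<exists>\<xi>\<in>{0..h}. g h - g 0 = h * (Df (x + (h, \<xi>)) (0,1) - Df (x + (0, \<xi>)) (0,1))"
proof -
  have der: "(g has_derivative (\<lambda>d. Df (x + (h, s)) (0,d) - Df (x + (0, s)) (0,d))) (at s within {0..h})"
    if "0 \<le> s" "s \<le> h" for s
  proof -
    have n1: "norm ((x + (h, s)) - x) < r" using norm_pair_le[of h s] that h by simp
    have n2: "norm ((x + (0, s)) - x) < r" using norm_pair_le[of 0 s] that h by simp
    have i1: "((\<lambda>s. x + (h, s)) has_derivative (\<lambda>d. (0, d))) (at s within {0..h})"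
      by (auto intro!: derivative_eq_intros)
    have i2: "((\<lambda>s. x + (0, s)) has_derivative (\<lambda>d. (0, d))) (at s within {0..h})"
      by (auto intro!: derivative_eq_intros)
    have c1: "((\<lambda>s. f (x + (h, s))) has_derivative (\<lambda>d. Df (x + (h, s)) (0,d))) (at s within {0..h})"
      using has_derivative_compose[OF i1 has_derivative_at_withinI[OF df[OF n1]]] by (simp add: o_def)
    have c2: "((\<lambda>s. f (x + (0, s))) has_derivative (\<lambda>d. Df (x + (0, s)) (0,d))) (at s within {0..h})"
      using has_derivative_compose[OF i2 has_derivative_at_withinI[OF df[OF n2]]] by (simp add: o_def)
    have "((\<lambda>s. f (x + (h, s)) - f (x + (0, s))) has_derivative (\<lambda>d. Df (x + (h, s)) (0,d) - Df (x + (0, s)) (0,d))) (at s within {0..h})"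
      by (rule has_derivative_diff[OF c1 c2])
    moreover have "g = (\<lambda>s. f (x + (h, s)) - f (x + (0, s)))" using dir by auto
    ultimately show ?thesis by simp
  qed
  obtain \<xi> where \<xi>: "\<xi> \<in> {0..h}" and eq: "g h - g 0 = Df (x + (h, \<xi>)) (0,h) - Df (x + (0, \<xi>)) (0,h)"
    using mvt_very_simple[of 0 h g "\<lambda>s d. Df (x + (h, s)) (0,d) - Df (x + (0, s)) (0,d)"] der h by auto
  have n1: "norm ((x + (h, \<xi>)) - x) < r" using norm_pair_le[of h \<xi>] \<xi> h by simp
  have n2: "norm ((x + (0, \<xi>)) - x) < r" using norm_pair_le[of 0 \<xi>] \<xi> h by simp
  have l1: "linear (Df (x + (h, \<xi>)))" using df[OF n1] has_derivative_linear by blast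
  have l2: "linear (Df (x + (0, \<xi>)))" using df[OF n2] has_derivative_linear by blast
  have "(0::real, h) = h *\<^sub>R (0, 1)" by simp
  then have "Df (x + (h, \<xi>)) (0,h) = h * Df (x + (h, \<xi>)) (0,1)"
       "Df (x + (0, \<xi>)) (0,h) = h * Df (x + (0, \<xi>)) (0,1)"
    using linear_scale[OF l1, of h "(0,1)"] linear_scale[OF l2, of h "(0,1)"] by auto
  then show ?thesis using \<xi> eq by (auto simp: algebra_simps)
qed


lemma schwarz_scalar:
  fixes f :: "real \<times> real \<Rightarrow> real" and x :: "real \<times> real"
  assumes r: "0 < r"
    and df: "\<And>q. norm (q - x) < r \<Longrightarrow> (f has_derivative Df q) (at q)"
    and d0: "((\<lambda>q. Df q (1,0)) has_derivative L0) (at x)"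
    and d1: "((\<lambda>q. Df q (0,1)) has_derivative L1) (at x)"
  shows "L0 (0,1) = L1 (1,0)"
proof (rule ccontr)
  assume ne: "L0 (0,1) \<noteq> L1 (1,0)"
  define e where "e = \<bar>L0 (0,1) - L1 (1,0)\<bar> / 12"
  have e: "e > 0" using ne by (simp add: e_def)
  have lin0: "linear L0" using d0 has_derivative_linear by blast
  have lin1: "linear L1" using d1 has_derivative_linear by blast
  obtain d0' where d0': "d0' > 0" and D0: "\<And>y. norm (y - x) < d0' \<Longrightarrow>
      norm (Df y (1,0) - Df x (1,0) - L0 (y - x)) \<le> e * norm (y - x)"
    using d0 e unfolding has_derivative_at_alt by meson
  obtain d1' where d1': "d1' > 0" and D1: "\<And>y. norm (y - x) < d1' \<Longrightarrow>
      norm (Df y (0,1) - Df x (0,1) - L1 (y - x)) \<le> e * norm (y - x)"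
    using d1 e unfolding has_derivative_at_alt by meson
  define h where "h = min r (min d0' d1') / 3"
  have h: "0 < h" "2*h < r" "2*h < d0'" "2*h < d1'" using r d0' d1' by (auto simp: h_def)
  define \<Delta> where "\<Delta> = f (x + (h,h)) - f (x + (h,0)) - f (x + (0,h)) + f x"
  have "\<exists>\<xi>\<in>{0..h}. (\<lambda>s. f (x + (s, h)) - f (x + (s, 0))) h - (\<lambda>s. f (x + (s, h)) - f (x + (s, 0))) 0
     = h * (Df (x + (\<xi>, h)) (1,0) - Df (x + (\<xi>, 0)) (1,0))"
    by (rule mvt_strip[OF df h(1,2)]) simp_all
  then obtain \<xi> where \<xi>: "\<xi> \<in> {0..h}" and E1: "\<Delta> = h * (Df (x + (\<xi>, h)) (1,0) - Df (x + (\<xi>, 0)) (1,0))"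
    by (auto simp: \<Delta>_def zero_prod_def[symmetric] algebra_simps)
  have "\<exists>\<eta>\<in>{0..h}. (\<lambda>s. f (x + (h, s)) - f (x + (0, s))) h - (\<lambda>s. f (x + (h, s)) - f (x + (0, s))) 0
     = h * (Df (x + (h, \<eta>)) (0,1) - Df (x + (0, \<eta>)) (0,1))"
    by (rule mvt_strip2[OF df h(1,2)]) simp_all
  then obtain \<eta> where \<eta>: "\<eta> \<in> {0..h}" and E2: "\<Delta> = h * (Df (x + (h, \<eta>)) (0,1) - Df (x + (0, \<eta>)) (0,1))"
    by (auto simp: \<Delta>_def zero_prod_def[symmetric] algebra_simps)
  have a1: "\<bar>Df (x + (\<xi>, h)) (1,0) - Df x (1,0) - L0 (\<xi>, h)\<bar> \<le> e * (2*h)"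
  proof -
    have "norm ((x + (\<xi>, h)) - x) \<le> 2*h" using norm_pair_le[of \<xi> h] \<xi> h by simp
    then show ?thesis using D0[of "x + (\<xi>, h)"] h e
      by (smt (verit, best) add_diff_cancel_left' mult_left_mono real_norm_def)
  qed
  have a2: "\<bar>Df (x + (\<xi>, 0)) (1,0) - Df x (1,0) - L0 (\<xi>, 0)\<bar> \<le> e * (2*h)"
  proof -
    have "norm ((x + (\<xi>, 0)) - x) \<le> 2*h" using norm_pair_le[of \<xi> 0] \<xi> h by simp
    then show ?thesis using D0[of "x + (\<xi>, 0)"] h e
      by (smt (verit, best) add_diff_cancel_left' mult_left_mono real_norm_def)
  qed
  have b1: "\<bar>Df (x + (h, \<eta>)) (0,1) - Df x (0,1) - L1 (h, \<eta>)\<bar> \<le> e * (2*h)"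
  proof -
    have "norm ((x + (h, \<eta>)) - x) \<le> 2*h" using norm_pair_le[of h \<eta>] \<eta> h by simp
    then show ?thesis using D1[of "x + (h, \<eta>)"] h e
      by (smt (verit, best) add_diff_cancel_left' mult_left_mono real_norm_def)
  qed
  have b2: "\<bar>Df (x + (0, \<eta>)) (0,1) - Df x (0,1) - L1 (0, \<eta>)\<bar> \<le> e * (2*h)"
  proof -
    have "norm ((x + (0, \<eta>)) - x) \<le> 2*h" using norm_pair_le[of 0 \<eta>] \<eta> h by simp
    then show ?thesis using D1[of "x + (0, \<eta>)"] h e
      by (smt (verit, best) add_diff_cancel_left' mult_left_mono real_norm_def)
  qed
  have L0s: "L0 (\<xi>, h) - L0 (\<xi>, 0) = h * L0 (0,1)"
  proof -
    have "(\<xi>, h) - (\<xi>, 0) = h *\<^sub>R (0::real, 1::real)" by simp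
    then show ?thesis using linear_diff[OF lin0, of "(\<xi>, h)" "(\<xi>, 0)"] linear_scale[OF lin0, of h "(0,1)"] by simp
  qed
  have L1s: "L1 (h, \<eta>) - L1 (0, \<eta>) = h * L1 (1,0)"
  proof -
    have "(h, \<eta>) - (0, \<eta>) = h *\<^sub>R (1::real, 0::real)" by simp
    then show ?thesis using linear_diff[OF lin1, of "(h, \<eta>)" "(0, \<eta>)"] linear_scale[OF lin1, of h "(1,0)"] by simp
  qed
  have c1: "\<bar>\<Delta> - h * (h * L0 (0,1))\<bar> \<le> h * (e * (4*h))"
  proof -
    have "\<bar>(Df (x + (\<xi>, h)) (1,0) - Df (x + (\<xi>, 0)) (1,0)) - h * L0 (0,1)\<bar> \<le> e * (4*h)"
      using a1 a2 L0s by linarith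
    then have "h * \<bar>(Df (x + (\<xi>, h)) (1,0) - Df (x + (\<xi>, 0)) (1,0)) - h * L0 (0,1)\<bar> \<le> h * (e * (4*h))"
      using h(1) by (simp add: mult_left_mono)
    moreover have "\<Delta> - h * (h * L0 (0,1)) = h * ((Df (x + (\<xi>, h)) (1,0) - Df (x + (\<xi>, 0)) (1,0)) - h * L0 (0,1))" using E1 by (simp add: algebra_simps)
    ultimately show ?thesis using h(1) by (simp add: abs_mult)
  qed
  have c2: "\<bar>\<Delta> - h * (h * L1 (1,0))\<bar> \<le> h * (e * (4*h))"
  proof -
    have "\<bar>(Df (x + (h, \<eta>)) (0,1) - Df (x + (0, \<eta>)) (0,1)) - h * L1 (1,0)\<bar> \<le> e * (4*h)"
      using b1 b2 L1s by linarith
    then have "h * \<bar>(Df (x + (h, \<eta>)) (0,1) - Df (x + (0, \<eta>)) (0,1)) - h * L1 (1,0)\<bar> \<le> h * (e * (4*h))"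
      using h(1) by (simp add: mult_left_mono)
    moreover have "\<Delta> - h * (h * L1 (1,0)) = h * ((Df (x + (h, \<eta>)) (0,1) - Df (x + (0, \<eta>)) (0,1)) - h * L1 (1,0))" using E2 by (simp add: algebra_simps)
    ultimately show ?thesis using h(1) by (simp add: abs_mult)
  qed
  have hh: "h * h > 0" using h(1) by simp
  have eq: "h * (h * L0 (0,1)) - h * (h * L1 (1,0)) = (h * h) * (L0 (0,1) - L1 (1,0))" by (simp add: algebra_simps)
  have "\<bar>h * (h * L0 (0,1)) - h * (h * L1 (1,0))\<bar> \<le> (h * h) * (8 * e)" using c1 c2 by (simp add: algebra_simps)
  then have "(h * h) * \<bar>L0 (0,1) - L1 (1,0)\<bar> \<le> (h * h) * (8 * e)" unfolding eq abs_mult using hh by simp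
  then have "\<bar>L0 (0,1) - L1 (1,0)\<bar> \<le> 8 * e" using hh by (simp add: mult_le_cancel_left_pos)
  then show False using e ne by (simp add: e_def)
qed


lemma schwarz:
  fixes f :: "real \<times> real \<Rightarrow> 'a::real_inner" and x :: "real \<times> real"
  assumes r: "0 < r"
    and df: "\<And>q. norm (q - x) < r \<Longrightarrow> (f has_derivative Df q) (at q)"
    and d0: "((\<lambda>q. Df q (1,0)) has_derivative L0) (at x)"
    and d1: "((\<lambda>q. Df q (0,1)) has_derivative L1) (at x)"
  shows "L0 (0,1) = L1 (1,0)"
proof -
  have "inner (L0 (0,1)) b = inner (L1 (1,0)) b" for b
  proof -
    have "(\<lambda>h. inner (L0 h) b) (0,1) = (\<lambda>h. inner (L1 h) b) (1,0)"
    proof (rule schwarz_scalar[OF r, where f="\<lambda>q. inner (f q) b" and Df="\<lambda>q h. inner (Df q h) b"])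
      show "((\<lambda>q. inner (f q) b) has_derivative (\<lambda>h. inner (Df q h) b)) (at q)" if "norm (q - x) < r" for q
        using has_derivative_inner_left[OF df[OF that]] .
      show "((\<lambda>q. inner (Df q (1, 0)) b) has_derivative (\<lambda>h. inner (L0 h) b)) (at x)"
        using has_derivative_inner_left[OF d0] .
      show "((\<lambda>q. inner (Df q (0, 1)) b) has_derivative (\<lambda>h. inner (L1 h) b)) (at x)"
        using has_derivative_inner_left[OF d1] .
    qed
    then show ?thesis by simp
  qed
  then have "inner (L0 (0,1) - L1 (1,0)) (L0 (0,1) - L1 (1,0)) = 0"
    by (simp add: inner_diff_left)
  then show ?thesis by simp
qed




definition d1 :: "(real \<times> real \<Rightarrow> 'a::real_normed_vector) \<Rightarrow> real \<times> real \<Rightarrow> real \<times> real \<Rightarrow> 'a" where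
  "d1 X q a = frechet_derivative X (at q) a"
definition d2 :: "(real \<times> real \<Rightarrow> 'a::real_normed_vector) \<Rightarrow> real \<times> real \<Rightarrow> real \<times> real \<Rightarrow> real \<times> real \<Rightarrow> 'a" where
  "d2 X q a b = frechet_derivative (\<lambda>q. d1 X q b) (at q) a"
definition d3 :: "(real \<times> real \<Rightarrow> 'a::real_normed_vector) \<Rightarrow> real \<times> real \<Rightarrow> real \<times> real \<Rightarrow> real \<times> real \<Rightarrow> real \<times> real \<Rightarrow> 'a" where
  "d3 X q a b c = frechet_derivative (\<lambda>q. d2 X q b c) (at q) a"

lemma lin_exp:
  assumes "linear (L :: real \<times> real \<Rightarrow> 'a::real_vector)"
  shows "L a = fst a *\<^sub>R L (1,0) + snd a *\<^sub>R L (0,1)"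
proof -
  have "a = fst a *\<^sub>R (1,0) + snd a *\<^sub>R (0::real,1::real)" by (cases a) simp
  then have "L a = L (fst a *\<^sub>R (1,0) + snd a *\<^sub>R (0,1))" by simp
  also have "\<dots> = L (fst a *\<^sub>R (1,0)) + L (snd a *\<^sub>R (0,1))" by (rule linear_add[OF assms])
  also have "\<dots> = fst a *\<^sub>R L (1,0) + snd a *\<^sub>R L (0,1)" using linear_scale[OF assms, of "fst a" "(1,0)"] linear_scale[OF assms, of "snd a" "(0,1)"] by simp
  finally show ?thesis .
qed

lemma deriv_unique_open:
  assumes "(f has_derivative F) (at p)" "(g has_derivative G) (at p)" "open U" "p \<in> U"
    "\<And>q. q \<in> U \<Longrightarrow> f q = g q"
  shows "F = G"
proof -
  have "(g has_derivative F) (at p)"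
    using has_derivative_transform_within_open[OF assms(1) assms(3,4)] assms(5) by auto
  then show ?thesis using assms(2) has_derivative_unique by blast
qed

locale tsurf =
  fixes U :: "(real \<times> real) set" and X :: "real \<times> real \<Rightarrow> 'n::finite mink"
  assumes ts: "timelike_surface U X"
begin

lemma opn: "open U" using ts by (simp add: timelike_surface_def)
lemma gneg: "p \<in> U \<Longrightarrow> gdet X p < 0" using ts by (simp add: timelike_surface_def)
lemma gnz: "p \<in> U \<Longrightarrow> gdet X p \<noteq> 0" using gneg by fastforce

lemma smooth: "p \<in> U \<Longrightarrow> dd hs X differentiable (at p)"
  using ts by (simp add: timelike_surface_def smooth_on_def)

lemma dX: "p \<in> U \<Longrightarrow> (X has_derivative d1 X p) (at p)"
  using smooth[of p "[]"] unfolding d1_def by (simp add: frechet_derivative_works)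

lemma dd1_eq: "dd [b] X = (\<lambda>q. d1 X q b)" by (simp add: d1_def fun_eq_iff)
lemma dd2_eq: "dd [b, c] X = (\<lambda>q. d2 X q b c)" by (simp add: d1_def d2_def fun_eq_iff)

lemma dD1: "p \<in> U \<Longrightarrow> ((\<lambda>q. d1 X q b) has_derivative (\<lambda>a. d2 X p a b)) (at p)"
  using smooth[of p "[b]"] unfolding dd1_eq
  by (simp add: frechet_derivative_works d2_def[abs_def])

lemma dD2: "p \<in> U \<Longrightarrow> ((\<lambda>q. d2 X q b c) has_derivative (\<lambda>a. d3 X p a b c)) (at p)"
  using smooth[of p "[b,c]"] unfolding dd2_eq
  by (simp add: frechet_derivative_works d3_def[abs_def])

lemma lin1: "p \<in> U \<Longrightarrow> d1 X p a = fst a *\<^sub>R d1 X p (1,0) + snd a *\<^sub>R d1 X p (0,1)"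
  by (rule lin_exp) (use dX has_derivative_linear in blast)

lemma lin2a: "p \<in> U \<Longrightarrow> d2 X p a b = fst a *\<^sub>R d2 X p (1,0) b + snd a *\<^sub>R d2 X p (0,1) b"
  by (rule lin_exp[where L="\<lambda>a. d2 X p a b"]) (use dD1 has_derivative_linear in blast)

lemma lin3a: "p \<in> U \<Longrightarrow> d3 X p a b c = fst a *\<^sub>R d3 X p (1,0) b c + snd a *\<^sub>R d3 X p (0,1) b c"
  by (rule lin_exp[where L="\<lambda>a. d3 X p a b c"]) (use dD2 has_derivative_linear in blast)

lemma lin2b: "p \<in> U \<Longrightarrow> d2 X p a b = fst b *\<^sub>R d2 X p a (1,0) + snd b *\<^sub>R d2 X p a (0,1)"
proof -
  assume p: "p \<in> U"
  have "(\<lambda>a. d2 X p a b) = (\<lambda>a. fst b *\<^sub>R d2 X p a (1,0) + snd b *\<^sub>R d2 X p a (0,1))"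
  proof (rule deriv_unique_open[OF dD1[OF p] _ opn p])
    show "((\<lambda>q. fst b *\<^sub>R d1 X q (1,0) + snd b *\<^sub>R d1 X q (0,1)) has_derivative
        (\<lambda>a. fst b *\<^sub>R d2 X p a (1,0) + snd b *\<^sub>R d2 X p a (0,1))) (at p)"
      by (intro has_derivative_add has_derivative_scaleR_right dD1 p)
    show "d1 X q b = fst b *\<^sub>R d1 X q (1,0) + snd b *\<^sub>R d1 X q (0,1)" if "q \<in> U" for q
      using lin1[OF that] .
  qed
  then show ?thesis by (metis)
qed

lemma lin3b: "p \<in> U \<Longrightarrow> d3 X p a b c = fst b *\<^sub>R d3 X p a (1,0) c + snd b *\<^sub>R d3 X p a (0,1) c"
proof -
  assume p: "p \<in> U"
  have "(\<lambda>a. d3 X p a b c) = (\<lambda>a. fst b *\<^sub>R d3 X p a (1,0) c + snd b *\<^sub>R d3 X p a (0,1) c)"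
  proof (rule deriv_unique_open[OF dD2[OF p] _ opn p])
    show "((\<lambda>q. fst b *\<^sub>R d2 X q (1,0) c + snd b *\<^sub>R d2 X q (0,1) c) has_derivative
        (\<lambda>a. fst b *\<^sub>R d3 X p a (1,0) c + snd b *\<^sub>R d3 X p a (0,1) c)) (at p)"
      by (intro has_derivative_add has_derivative_scaleR_right dD2 p)
    show "d2 X q b c = fst b *\<^sub>R d2 X q (1,0) c + snd b *\<^sub>R d2 X q (0,1) c" if "q \<in> U" for q
      using lin2a[OF that] .
  qed
  then show ?thesis by (metis)
qed

lemma lin3c: "p \<in> U \<Longrightarrow> d3 X p a b c = fst c *\<^sub>R d3 X p a b (1,0) + snd c *\<^sub>R d3 X p a b (0,1)"
proof -
  assume p: "p \<in> U"
  have "(\<lambda>a. d3 X p a b c) = (\<lambda>a. fst c *\<^sub>R d3 X p a b (1,0) + snd c *\<^sub>R d3 X p a b (0,1))"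
  proof (rule deriv_unique_open[OF dD2[OF p] _ opn p])
    show "((\<lambda>q. fst c *\<^sub>R d2 X q b (1,0) + snd c *\<^sub>R d2 X q b (0,1)) has_derivative
        (\<lambda>a. fst c *\<^sub>R d3 X p a b (1,0) + snd c *\<^sub>R d3 X p a b (0,1))) (at p)"
      by (intro has_derivative_add has_derivative_scaleR_right dD2 p)
    show "d2 X q b c = fst c *\<^sub>R d2 X q b (1,0) + snd c *\<^sub>R d2 X q b (0,1)" if "q \<in> U" for q
      using lin2b[OF that] .
  qed
  then show ?thesis by (metis)
qed

lemma ball_in: "p \<in> U \<Longrightarrow> \<exists>r>0. \<forall>q. norm (q - p) < r \<longrightarrow> q \<in> U"
  using opn unfolding open_dist by (metis dist_norm dist_commute)

lemma sym2_base: "p \<in> U \<Longrightarrow> d2 X p (0,1) (1,0) = d2 X p (1,0) (0,1)"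
proof -
  assume p: "p \<in> U"
  obtain r where r: "r > 0" "\<And>q. norm (q - p) < r \<Longrightarrow> q \<in> U" using ball_in[OF p] by blast
  show ?thesis
    by (rule schwarz[OF r(1), where f=X and Df="d1 X"]) (auto intro: dX dD1 r(2) p)
qed

lemma sym3_base: "p \<in> U \<Longrightarrow> d3 X p (0,1) (1,0) c = d3 X p (1,0) (0,1) c"
proof -
  assume p: "p \<in> U"
  obtain r where r: "r > 0" "\<And>q. norm (q - p) < r \<Longrightarrow> q \<in> U" using ball_in[OF p] by blast
  show ?thesis
    by (rule schwarz[OF r(1), where f="\<lambda>q. d1 X q c" and Df="\<lambda>q a. d2 X q a c"]) (auto intro: dD2 dD1 r(2) p)
qed

lemma exp2: "p \<in> U \<Longrightarrow> d2 X p a b = fst a *\<^sub>R (fst b *\<^sub>R d2 X p (1,0) (1,0) + snd b *\<^sub>R d2 X p (1,0) (0,1))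
   + snd a *\<^sub>R (fst b *\<^sub>R d2 X p (0,1) (1,0) + snd b *\<^sub>R d2 X p (0,1) (0,1))"
  using lin2a[of p a b] lin2b[of p "(1,0)" b] lin2b[of p "(0,1)" b] by simp

lemma exp3ab: "p \<in> U \<Longrightarrow> d3 X p a b c = fst a *\<^sub>R (fst b *\<^sub>R d3 X p (1,0) (1,0) c + snd b *\<^sub>R d3 X p (1,0) (0,1) c)
   + snd a *\<^sub>R (fst b *\<^sub>R d3 X p (0,1) (1,0) c + snd b *\<^sub>R d3 X p (0,1) (0,1) c)"
  using lin3a[of p a b c] lin3b[of p "(1,0)" b c] lin3b[of p "(0,1)" b c] by simp

lemma sym2: "p \<in> U \<Longrightarrow> d2 X p a b = d2 X p b a"
  using exp2[of p a b] exp2[of p b a] sym2_base[of p] by (simp add: algebra_simps)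

lemma sym3: "p \<in> U \<Longrightarrow> d3 X p a b c = d3 X p b a c"
  using exp3ab[of p a b c] exp3ab[of p b a c] sym3_base[of p c] by (simp add: algebra_simps)

end




lemma mink_comm: "mink x y = mink y x"
  unfolding mink_def by (simp add: inner_commute mult.commute)

lemma mink_add_left [simp]: "mink (x + y) z = mink x z + mink y z"
  unfolding mink_def by (simp add: inner_add_left algebra_simps)
lemma mink_add_right [simp]: "mink z (x + y) = mink z x + mink z y"
  unfolding mink_def by (simp add: inner_add_right algebra_simps)
lemma mink_diff_left [simp]: "mink (x - y) z = mink x z - mink y z"
  unfolding mink_def by (simp add: inner_diff_left algebra_simps)
lemma mink_diff_right [simp]: "mink z (x - y) = mink z x - mink z y"
  unfolding mink_def by (simp add: inner_diff_right algebra_simps)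
lemma mink_scaleR_left [simp]: "mink (c *\<^sub>R x) z = c * mink x z"
  unfolding mink_def by (simp add: algebra_simps)
lemma mink_scaleR_right [simp]: "mink z (c *\<^sub>R x) = c * mink z x"
  unfolding mink_def by (simp add: algebra_simps)
lemma mink_minus_left [simp]: "mink (- x) z = - mink x z"
  unfolding mink_def by (simp add: algebra_simps)
lemma mink_minus_right [simp]: "mink z (- x) = - mink z x"
  unfolding mink_def by (simp add: algebra_simps)
lemma mink_zero_left [simp]: "mink 0 z = 0"
  unfolding mink_def by simp
lemma mink_zero_right [simp]: "mink z 0 = 0"
  unfolding mink_def by simp
lemma mink_sum_left: "mink (sum f S) z = (\<Sum>i\<in>S. mink (f i) z)"
  by (induction S rule: infinite_finite_induct) auto

lemma has_derivative_mink:
  assumes "(F has_derivative F') (at p)" "(G has_derivative G') (at p)"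
  shows "((\<lambda>q. mink (F q) (G q)) has_derivative (\<lambda>h. mink (F' h) (G p) + mink (F p) (G' h))) (at p)"
proof -
  have "((\<lambda>q. - fst (F q) * fst (G q) + inner (snd (F q)) (snd (G q))) has_derivative
     (\<lambda>h. (- fst (F p) * fst (G' h) + - fst (F' h) * fst (G p)) +
          (inner (snd (F p)) (snd (G' h)) + inner (snd (F' h)) (snd (G p))))) (at p)"
    by (intro has_derivative_add has_derivative_minus has_derivative_mult has_derivative_inner
        has_derivative_fst has_derivative_snd assms)
  then show ?thesis unfolding mink_def by (simp add: algebra_simps inner_commute)
qed

lemma sum2: "(\<Sum>i<2. f i) = f 0 + f (1::nat)"
  by (simp add: numeral_2_eq_2)

context tsurf
begin

lemma ctan0: "ctan X q 0 = d1 X q (1,0)" by (simp add: ctan_def d1_def ebasis_def)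
lemma ctan1: "ctan X q 1 = d1 X q (0,1)" by (simp add: ctan_def d1_def ebasis_def)
lemma ctan1': "ctan X q (Suc 0) = d1 X q (0,1)" by (simp add: ctan_def d1_def ebasis_def)

lemma lin_d1: "q \<in> U \<Longrightarrow> linear (d1 X q)"
  using dX has_derivative_linear by blast
lemma d1_add: "q \<in> U \<Longrightarrow> d1 X q (a + b) = d1 X q a + d1 X q b"
  using lin_d1 linear_add by blast
lemma d1_scale: "q \<in> U \<Longrightarrow> d1 X q (c *\<^sub>R a) = c *\<^sub>R d1 X q a"
  using lin_d1 linear_scale by blast
lemma d1_minus: "q \<in> U \<Longrightarrow> d1 X q (- a) = - d1 X q a"
  using lin_d1 linear_neg by blast
lemma d1_diff: "q \<in> U \<Longrightarrow> d1 X q (a - b) = d1 X q a - d1 X q b"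
  using lin_d1 linear_diff by blast
lemma d1_zero: "q \<in> U \<Longrightarrow> d1 X q 0 = 0"
  using lin_d1 linear_0 by blast

lemma coord_expl: "coord X q v =
   (ginv X q 0 0 * mink v (d1 X q (1,0)) + ginv X q 0 1 * mink v (d1 X q (0,1)),
    ginv X q 1 0 * mink v (d1 X q (1,0)) + ginv X q 1 1 * mink v (d1 X q (0,1)))"
  unfolding coord_def by (simp add: sum2 ebasis_def ctan0 ctan1 ctan1')

lemma ginv_expl:
  "ginv X q 0 0 = mink (d1 X q (0,1)) (d1 X q (0,1)) / gdet X q"
  "ginv X q 1 1 = mink (d1 X q (1,0)) (d1 X q (1,0)) / gdet X q"
  "ginv X q 0 1 = - mink (d1 X q (1,0)) (d1 X q (0,1)) / gdet X q"
  "ginv X q 1 0 = - mink (d1 X q (1,0)) (d1 X q (0,1)) / gdet X q"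
  by (simp_all add: ginv_def metric_def ctan0 ctan1 ctan1')

lemma gdet_expl: "gdet X q = mink (d1 X q (1,0)) (d1 X q (1,0)) * mink (d1 X q (0,1)) (d1 X q (0,1))
   - mink (d1 X q (1,0)) (d1 X q (0,1)) * mink (d1 X q (1,0)) (d1 X q (0,1))"
  unfolding gdet_def metric_def ctan0 ctan1 ctan1' using mink_comm[of "d1 X q (0,1)" "d1 X q (1,0)"] by simp

lemma coord_d1: assumes q: "q \<in> U" shows "coord X q (d1 X q a) = a"
proof -
  define g00 where "g00 = mink (d1 X q (1,0)) (d1 X q (1,0))"
  define g01 where "g01 = mink (d1 X q (1,0)) (d1 X q (0,1))"
  define g11 where "g11 = mink (d1 X q (0,1)) (d1 X q (0,1))"
  have D: "g00 * g11 - g01 * g01 \<noteq> 0" using gnz[OF q] by (simp add: gdet_expl g00_def g01_def g11_def)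
  have m0: "mink (d1 X q a) (d1 X q (1,0)) = fst a * g00 + snd a * g01"
    using mink_comm[of "d1 X q (0,1)" "d1 X q (1,0)"] by (subst lin1[OF q]) (simp add: g00_def g01_def)
  have m1: "mink (d1 X q a) (d1 X q (0,1)) = fst a * g01 + snd a * g11"
    by (subst lin1[OF q]) (simp add: g11_def g01_def)
  obtain a1 a2 where a: "a = (a1, a2)" by (cases a)
  have e1: "g11 / (g00 * g11 - g01 * g01) * (a1 * g00 + a2 * g01) +
          - g01 / (g00 * g11 - g01 * g01) * (a1 * g01 + a2 * g11) = a1"
    using D by (simp add: divide_simps) (simp add: algebra_simps)
  have e2: "- g01 / (g00 * g11 - g01 * g01) * (a1 * g00 + a2 * g01) +
          g00 / (g00 * g11 - g01 * g01) * (a1 * g01 + a2 * g11) = a2"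
    using D by (simp add: divide_simps) (simp add: algebra_simps)
  show ?thesis
    unfolding coord_expl m0 m1 ginv_expl gdet_expl
    unfolding g00_def[symmetric] g01_def[symmetric] g11_def[symmetric]
    using e1 e2 a by simp
qed


lemma mink_coord: assumes q: "q \<in> U"
  shows "mink (d1 X q (coord X q v)) (d1 X q b) = mink v (d1 X q b)"
proof -
  define g00 where "g00 = mink (d1 X q (1,0)) (d1 X q (1,0))"
  define g01 where "g01 = mink (d1 X q (1,0)) (d1 X q (0,1))"
  define g11 where "g11 = mink (d1 X q (0,1)) (d1 X q (0,1))"
  define m0 where "m0 = mink v (d1 X q (1,0))"
  define m1 where "m1 = mink v (d1 X q (0,1))"
  have D: "g00 * g11 - g01 * g01 \<noteq> 0" using gnz[OF q] by (simp add: gdet_expl g00_def g01_def g11_def)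
  have c: "coord X q v = (g11 / (g00 * g11 - g01 * g01) * m0 + - g01 / (g00 * g11 - g01 * g01) * m1,
                         - g01 / (g00 * g11 - g01 * g01) * m0 + g00 / (g00 * g11 - g01 * g01) * m1)"
    unfolding coord_expl ginv_expl gdet_expl g00_def g01_def g11_def m0_def m1_def by simp
  have x0: "mink (d1 X q (coord X q v)) (d1 X q (1,0)) = m0"
  proof -
    have "mink (d1 X q (coord X q v)) (d1 X q (1,0)) = fst (coord X q v) * g00 + snd (coord X q v) * g01"
      using mink_comm[of "d1 X q (0,1)" "d1 X q (1,0)"] by (subst lin1[OF q]) (simp add: g00_def g01_def)
    also have "\<dots> = m0" unfolding c using D by (simp add: divide_simps) (simp add: algebra_simps)
    finally show ?thesis .
  qed
  have x1: "mink (d1 X q (coord X q v)) (d1 X q (0,1)) = m1"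
  proof -
    have "mink (d1 X q (coord X q v)) (d1 X q (0,1)) = fst (coord X q v) * g01 + snd (coord X q v) * g11"
      by (subst lin1[OF q]) (simp add: g11_def g01_def)
    also have "\<dots> = m1" unfolding c using D by (simp add: divide_simps) (simp add: algebra_simps)
    finally show ?thesis .
  qed
  show ?thesis
    by (subst (1 2) lin1[OF q, of b]) (simp add: x0 x1 m0_def m1_def)
qed

lemma tproj_eq: assumes q: "q \<in> U" shows "tproj X q v = d1 X q (coord X q v)"
  unfolding tproj_def sum2 ctan0 ctan1 lin1[OF q, of "coord X q v"]
  by (simp add: coord_expl algebra_simps scaleR_add_left)

lemma coord_add [simp]: "coord X q (u + v) = coord X q u + coord X q v"
  by (simp add: coord_expl algebra_simps)
lemma coord_diff [simp]: "coord X q (u - v) = coord X q u - coord X q v"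
  by (simp add: coord_expl algebra_simps)
lemma coord_scale [simp]: "coord X q (c *\<^sub>R v) = c *\<^sub>R coord X q v"
  by (simp add: coord_expl algebra_simps)
lemma coord_minus [simp]: "coord X q (- v) = - coord X q v"
  by (simp add: coord_expl algebra_simps)
lemma coord_zero [simp]: "coord X q 0 = 0"
  by (simp only: coord_expl mink_zero_left) (simp add: zero_prod_def)

lemma nproj_expl: "q \<in> U \<Longrightarrow> nproj X q v = v - d1 X q (coord X q v)"
  by (simp add: nproj_def tproj_eq)

lemma mink_nproj_d1: "q \<in> U \<Longrightarrow> mink (nproj X q v) (d1 X q b) = 0"
  by (simp add: nproj_expl mink_coord)
lemma mink_d1_nproj: "q \<in> U \<Longrightarrow> mink (d1 X q b) (nproj X q v) = 0"
  using mink_nproj_d1 mink_comm by metis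

lemma coord_nproj: "q \<in> U \<Longrightarrow> coord X q (nproj X q v) = 0"
  by (simp add: nproj_expl coord_d1)
lemma nproj_d1: "q \<in> U \<Longrightarrow> nproj X q (d1 X q a) = 0"
  by (simp add: nproj_expl coord_d1)
lemma nproj_add: "q \<in> U \<Longrightarrow> nproj X q (u + v) = nproj X q u + nproj X q v"
  by (simp add: nproj_expl d1_add)
lemma nproj_diff: "q \<in> U \<Longrightarrow> nproj X q (u - v) = nproj X q u - nproj X q v"
  by (simp add: nproj_expl d1_diff)
lemma nproj_scale: "q \<in> U \<Longrightarrow> nproj X q (c *\<^sub>R v) = c *\<^sub>R nproj X q v"
  by (simp add: nproj_expl d1_scale algebra_simps)
lemma nproj_minus: "q \<in> U \<Longrightarrow> nproj X q (- v) = - nproj X q v"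
  by (simp add: nproj_expl d1_minus)
lemma nproj_zero: "q \<in> U \<Longrightarrow> nproj X q 0 = 0"
  by (simp add: nproj_expl d1_zero)
lemma nproj_nproj: "q \<in> U \<Longrightarrow> nproj X q (nproj X q v) = nproj X q v"
  by (metis coord_nproj d1_zero diff_zero nproj_expl)

lemma mink_nproj_sym: assumes q: "q \<in> U" shows "mink (nproj X q u) w = mink u (nproj X q w)"
proof -
  have a: "mink (d1 X q (coord X q u)) w = mink (d1 X q (coord X q u)) (d1 X q (coord X q w))"
    using mink_coord[OF q, of w "coord X q u"] mink_comm by metis
  have b: "mink u (d1 X q (coord X q w)) = mink (d1 X q (coord X q u)) (d1 X q (coord X q w))"
    using mink_coord[OF q, of u "coord X q w"] by simp
  show ?thesis by (simp add: nproj_expl[OF q] a b)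
qed

lemma mink_nproj_both: "q \<in> U \<Longrightarrow> mink (nproj X q u) (nproj X q w) = mink u (nproj X q w)"
  by (metis mink_nproj_sym nproj_nproj)

lemma mink_decomp: assumes q: "q \<in> U"
  shows "mink u w = mink (d1 X q (coord X q u)) (d1 X q (coord X q w)) + mink (nproj X q u) (nproj X q w)"
proof -
  have "mink (nproj X q u) (nproj X q w) = mink u (nproj X q w)" using mink_nproj_both[OF q] .
  also have "\<dots> = mink u w - mink u (d1 X q (coord X q w))" by (simp add: nproj_expl[OF q])
  also have "mink u (d1 X q (coord X q w)) = mink (d1 X q (coord X q u)) (d1 X q (coord X q w))"
    using mink_coord[OF q, of u "coord X q w"] by simp
  finally show ?thesis by simp
qed

lemma mink_d1_expl: assumes q: "q \<in> U" shows "mink (d1 X q a) (d1 X q b) =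
   fst a * fst b * mink (d1 X q (1,0)) (d1 X q (1,0))
 + (fst a * snd b + snd a * fst b) * mink (d1 X q (1,0)) (d1 X q (0,1))
 + snd a * snd b * mink (d1 X q (0,1)) (d1 X q (0,1))"
  using mink_comm[of "d1 X q (0,1)" "d1 X q (1,0)"]
  unfolding lin1[OF q, of a] lin1[OF q, of b] by (simp add: algebra_simps)

lemma frame_alg:
  fixes g00 g01 g11 t1 t2 w1 w2 :: real
  assumes "t1*t1*g00 + (t1*t2 + t2*t1)*g01 + t2*t2*g11 = 0"
    "w1*w1*g00 + (w1*w2 + w2*w1)*g01 + w2*w2*g11 = 0"
    "t1*w1*g00 + (t1*w2+t2*w1)*g01 + t2*w2*g11 = -1"
  shows "(t1*w2-t2*w1)^2*(g00*g11-g01*g01) = -1"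
    "g11 = -2*t1*w1*(g00*g11 - g01*g01)"
    "g01 = (t1*w2+t2*w1)*(g00*g11 - g01*g01)"
    "g00 = -2*t2*w2*(g00*g11 - g01*g01)"
  using assms by algebra+

lemma ginv_frame:
  assumes q: "q \<in> U"
    and tt: "mink (d1 X q t) (d1 X q t) = 0" and ww: "mink (d1 X q w) (d1 X q w) = 0"
    and tw: "mink (d1 X q t) (d1 X q w) = -1"
  shows "ginv X q 0 0 = -2 * fst t * fst w"
    "ginv X q 1 1 = -2 * snd t * snd w"
    "ginv X q 0 1 = - (fst t * snd w + snd t * fst w)"
    "ginv X q 1 0 = - (fst t * snd w + snd t * fst w)"
    "(fst t * snd w - snd t * fst w)^2 * gdet X q = -1"
proof -
  define g00 where "g00 = mink (d1 X q (1,0)) (d1 X q (1,0))"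
  define g01 where "g01 = mink (d1 X q (1,0)) (d1 X q (0,1))"
  define g11 where "g11 = mink (d1 X q (0,1)) (d1 X q (0,1))"
  have D: "g00 * g11 - g01 * g01 \<noteq> 0" using gnz[OF q] by (simp add: gdet_expl g00_def g01_def g11_def)
  have C1: "fst t * fst t * g00 + (fst t * snd t + snd t * fst t) * g01 + snd t * snd t * g11 = 0"
    using tt unfolding mink_d1_expl[OF q, of t t] g00_def[symmetric] g01_def[symmetric] g11_def[symmetric] .
  have C2: "fst w * fst w * g00 + (fst w * snd w + snd w * fst w) * g01 + snd w * snd w * g11 = 0"
    using ww unfolding mink_d1_expl[OF q, of w w] g00_def[symmetric] g01_def[symmetric] g11_def[symmetric] .
  have C3: "fst t * fst w * g00 + (fst t * snd w + snd t * fst w) * g01 + snd t * snd w * g11 = -1"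
    using tw unfolding mink_d1_expl[OF q, of t w] g00_def[symmetric] g01_def[symmetric] g11_def[symmetric] .
  note h = frame_alg[OF C1 C2 C3]
  define dd where "dd = g00 * g11 - g01 * g01"
  note h' = h[unfolded dd_def[symmetric]]
  have D': "dd \<noteq> 0" using D by (simp add: dd_def)
  show "ginv X q 0 0 = -2 * fst t * fst w" "ginv X q 1 1 = -2 * snd t * snd w"
    "ginv X q 0 1 = - (fst t * snd w + snd t * fst w)" "ginv X q 1 0 = - (fst t * snd w + snd t * fst w)"
    unfolding ginv_expl gdet_expl g00_def[symmetric] g01_def[symmetric] g11_def[symmetric] dd_def[symmetric]
    using D' h'(2-4) by (auto simp: divide_simps)
  show "(fst t * snd w - snd t * fst w)^2 * gdet X q = -1"
    unfolding gdet_expl g00_def[symmetric] g01_def[symmetric] g11_def[symmetric] using h by simp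
qed

lemma coord_frame:
  assumes q: "q \<in> U"
    and tt: "mink (d1 X q t) (d1 X q t) = 0" and ww: "mink (d1 X q w) (d1 X q w) = 0"
    and tw: "mink (d1 X q t) (d1 X q w) = -1"
  shows "coord X q v = (- mink v (d1 X q w)) *\<^sub>R t + (- mink v (d1 X q t)) *\<^sub>R w"
proof -
  note gf = ginv_frame[OF q tt ww tw]
  have mw: "mink v (d1 X q w) = fst w * mink v (d1 X q (1,0)) + snd w * mink v (d1 X q (0,1))"
    by (subst lin1[OF q]) simp
  have mt: "mink v (d1 X q t) = fst t * mink v (d1 X q (1,0)) + snd t * mink v (d1 X q (0,1))"
    by (subst lin1[OF q]) simp
  show ?thesis unfolding coord_expl gf mw mt
    by (simp add: prod_eq_iff algebra_simps)
qed

end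




lemma differentiable_mink [simp, derivative_intros]:
  assumes "F differentiable (at p)" "G differentiable (at p)"
  shows "(\<lambda>q. mink (F q) (G q)) differentiable (at p)"
  using assms has_derivative_mink unfolding differentiable_def by blast

lemma differentiable_fst' [derivative_intros]: "f differentiable (at p) \<Longrightarrow> (\<lambda>x. fst (f x)) differentiable (at p)"
  unfolding differentiable_def using has_derivative_fst by blast
lemma differentiable_snd' [derivative_intros]: "f differentiable (at p) \<Longrightarrow> (\<lambda>x. snd (f x)) differentiable (at p)"
  unfolding differentiable_def using has_derivative_snd by blast

context tsurf
begin

lemma exp3bc: "p \<in> U \<Longrightarrow> d3 X p c a b = fst a *\<^sub>R (fst b *\<^sub>R d3 X p c (1,0) (1,0) + snd b *\<^sub>R d3 X p c (1,0) (0,1))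
   + snd a *\<^sub>R (fst b *\<^sub>R d3 X p c (0,1) (1,0) + snd b *\<^sub>R d3 X p c (0,1) (0,1))"
  using lin3b[of p c a b] lin3c[of p c "(1,0)" b] lin3c[of p c "(0,1)" b] by simp

lemma D1V:
  assumes p: "p \<in> U" and a: "(a has_derivative a') (at p)"
  shows "((\<lambda>q. d1 X q (a q)) has_derivative (\<lambda>c. d2 X p c (a p) + d1 X p (a' c))) (at p)"
proof -
  have "((\<lambda>q. fst (a q) *\<^sub>R d1 X q (1,0) + snd (a q) *\<^sub>R d1 X q (0,1)) has_derivative
     (\<lambda>c. (fst (a p) *\<^sub>R d2 X p c (1,0) + fst (a' c) *\<^sub>R d1 X p (1,0)) +
          (snd (a p) *\<^sub>R d2 X p c (0,1) + snd (a' c) *\<^sub>R d1 X p (0,1)))) (at p)"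
    by (intro has_derivative_add has_derivative_scaleR has_derivative_fst has_derivative_snd a dD1 p)
  then have "((\<lambda>q. fst (a q) *\<^sub>R d1 X q (1,0) + snd (a q) *\<^sub>R d1 X q (0,1)) has_derivative
     (\<lambda>c. d2 X p c (a p) + d1 X p (a' c))) (at p)"
    by (rule has_derivative_eq_rhs)
      (simp add: fun_eq_iff lin2b[OF p, of _ "a p"] lin1[OF p, of "a' _"] algebra_simps)
  then show ?thesis
    by (rule has_derivative_transform_within_open[OF _ opn p]) (simp add: lin1[symmetric])
qed

lemma D2V:
  assumes p: "p \<in> U" and a: "(a has_derivative a') (at p)" and b: "(b has_derivative b') (at p)"
  shows "((\<lambda>q. d2 X q (a q) (b q)) has_derivative
     (\<lambda>c. d3 X p c (a p) (b p) + d2 X p (a' c) (b p) + d2 X p (a p) (b' c))) (at p)"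
proof -
  let ?F = "\<lambda>q. fst (a q) *\<^sub>R (fst (b q) *\<^sub>R d2 X q (1,0) (1,0) + snd (b q) *\<^sub>R d2 X q (1,0) (0,1))
   + snd (a q) *\<^sub>R (fst (b q) *\<^sub>R d2 X q (0,1) (1,0) + snd (b q) *\<^sub>R d2 X q (0,1) (0,1))"
  have "(?F has_derivative
     (\<lambda>c. (fst (a p) *\<^sub>R ((fst (b p) *\<^sub>R d3 X p c (1,0) (1,0) + fst (b' c) *\<^sub>R d2 X p (1,0) (1,0))
              + (snd (b p) *\<^sub>R d3 X p c (1,0) (0,1) + snd (b' c) *\<^sub>R d2 X p (1,0) (0,1)))
          + fst (a' c) *\<^sub>R (fst (b p) *\<^sub>R d2 X p (1,0) (1,0) + snd (b p) *\<^sub>R d2 X p (1,0) (0,1)))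
        + (snd (a p) *\<^sub>R ((fst (b p) *\<^sub>R d3 X p c (0,1) (1,0) + fst (b' c) *\<^sub>R d2 X p (0,1) (1,0))
              + (snd (b p) *\<^sub>R d3 X p c (0,1) (0,1) + snd (b' c) *\<^sub>R d2 X p (0,1) (0,1)))
          + snd (a' c) *\<^sub>R (fst (b p) *\<^sub>R d2 X p (0,1) (1,0) + snd (b p) *\<^sub>R d2 X p (0,1) (0,1))))) (at p)"
    by (intro has_derivative_add has_derivative_scaleR has_derivative_fst has_derivative_snd a b dD2 p)
  then have "(?F has_derivative
     (\<lambda>c. d3 X p c (a p) (b p) + d2 X p (a' c) (b p) + d2 X p (a p) (b' c))) (at p)"
    by (rule has_derivative_eq_rhs)
      (simp add: fun_eq_iff exp3bc[OF p, of _ "a p" "b p"] exp2[OF p, of "a' _" "b p"] exp2[OF p, of "a p" "b' _"] algebra_simps)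
  then show ?thesis
    by (rule has_derivative_transform_within_open[OF _ opn p]) (simp add: exp2[symmetric])
qed

lemma diff_d1 [derivative_intros]: "p \<in> U \<Longrightarrow> a differentiable (at p) \<Longrightarrow> (\<lambda>q. d1 X q (a q)) differentiable (at p)"
  using D1V unfolding differentiable_def by blast

lemma diff_d2 [derivative_intros]: "p \<in> U \<Longrightarrow> a differentiable (at p) \<Longrightarrow> b differentiable (at p) \<Longrightarrow>
   (\<lambda>q. d2 X q (a q) (b q)) differentiable (at p)"
  using D2V unfolding differentiable_def by blast

lemma diff_gdet: "p \<in> U \<Longrightarrow> (\<lambda>q. gdet X q) differentiable (at p)"
  unfolding gdet_expl by (intro derivative_intros)

lemma diff_coord [derivative_intros]:
  assumes p: "p \<in> U" and b: "b differentiable (at p)"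
  shows "(\<lambda>q. coord X q (b q)) differentiable (at p)"
  unfolding coord_expl ginv_expl
  using gnz[OF p] by (intro derivative_intros diff_gdet p b) auto

lemma DNP:
  assumes p: "p \<in> U" and b: "(b has_derivative b') (at p)"
  obtains F' where "((\<lambda>q. nproj X q (b q)) has_derivative F') (at p)"
    "\<And>c. nproj X p (F' c) = nproj X p (b' c) - nproj X p (d2 X p c (coord X p (b p)))"
proof -
  have "(\<lambda>q. coord X q (b q)) differentiable (at p)"
    using diff_coord[OF p] b differentiable_def by blast
  then obtain k' where k: "((\<lambda>q. coord X q (b q)) has_derivative k') (at p)"
    unfolding differentiable_def by blast
  have "((\<lambda>q. b q - d1 X q (coord X q (b q))) has_derivative
      (\<lambda>c. b' c - (d2 X p c (coord X p (b p)) + d1 X p (k' c)))) (at p)"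
    by (intro has_derivative_diff b D1V[OF p k])
  then have "((\<lambda>q. nproj X q (b q)) has_derivative
      (\<lambda>c. b' c - (d2 X p c (coord X p (b p)) + d1 X p (k' c)))) (at p)"
    by (rule has_derivative_transform_within_open[OF _ opn p]) (simp add: nproj_expl)
  moreover have "nproj X p (b' c - (d2 X p c (coord X p (b p)) + d1 X p (k' c))) =
      nproj X p (b' c) - nproj X p (d2 X p c (coord X p (b p)))" for c
    by (simp add: nproj_diff[OF p] nproj_add[OF p] nproj_d1[OF p])
  ultimately show ?thesis using that by blast
qed

end




context tsurf
begin

definition IIc :: "real \<times> real \<Rightarrow> real \<times> real \<Rightarrow> real \<times> real \<Rightarrow> 'n mink" where
  "IIc q a b = nproj X q (d2 X q a b)"

lemma II_eq: "II X q v w = IIc q (coord X q v) (coord X q w)"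
  by (simp add: II_def IIc_def d2_def d1_def)

lemma in_tangent: assumes q: "q \<in> U" and v: "v \<in> tangent_space X q"
  shows "d1 X q (coord X q v) = v"
proof -
  from v obtain k where "v - k *\<^sub>R ctan X q 0 \<in> span {ctan X q 1}"
    unfolding tangent_space_def using span_breakdown_eq by blast
  then obtain m where "v - k *\<^sub>R ctan X q 0 = m *\<^sub>R ctan X q 1"
    unfolding span_singleton by auto
  then have "v = d1 X q (k, m)" by (simp add: lin1[OF q, of "(k,m)"] ctan0 ctan1 ctan1' algebra_simps)
  then show ?thesis by (simp add: coord_d1[OF q])
qed

lemma d2_lin_a: "p \<in> U \<Longrightarrow> linear (\<lambda>a. d2 X p a b)"
  using dD1 has_derivative_linear by blast
lemma d2_lin_b: "p \<in> U \<Longrightarrow> linear (\<lambda>b. d2 X p a b)"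
  using d2_lin_a[of p a] sym2 by (simp add: sym2[of p a])

lemma d2_add1: "p \<in> U \<Longrightarrow> d2 X p (a + a') b = d2 X p a b + d2 X p a' b"
  using d2_lin_a linear_add by fastforce
lemma d2_scale1: "p \<in> U \<Longrightarrow> d2 X p (c *\<^sub>R a) b = c *\<^sub>R d2 X p a b"
  using d2_lin_a linear_scale by fastforce
lemma d2_minus1: "p \<in> U \<Longrightarrow> d2 X p (- a) b = - d2 X p a b"
  using d2_lin_a linear_neg by fastforce
lemma d2_diff1: "p \<in> U \<Longrightarrow> d2 X p (a - a') b = d2 X p a b - d2 X p a' b"
  using d2_lin_a linear_diff by fastforce
lemma d2_add2: "p \<in> U \<Longrightarrow> d2 X p b (a + a') = d2 X p b a + d2 X p b a'"
  using d2_lin_b linear_add by fastforce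
lemma d2_scale2: "p \<in> U \<Longrightarrow> d2 X p b (c *\<^sub>R a) = c *\<^sub>R d2 X p b a"
  using d2_lin_b linear_scale by fastforce
lemma d2_minus2: "p \<in> U \<Longrightarrow> d2 X p b (- a) = - d2 X p b a"
  using d2_lin_b linear_neg by fastforce
lemma d2_diff2: "p \<in> U \<Longrightarrow> d2 X p b (a - a') = d2 X p b a - d2 X p b a'"
  using d2_lin_b linear_diff by fastforce

lemma IIc_sym: "p \<in> U \<Longrightarrow> IIc p a b = IIc p b a"
  by (simp add: IIc_def sym2)

lemma IIc_exp: "p \<in> U \<Longrightarrow> IIc p a b = fst a *\<^sub>R (fst b *\<^sub>R IIc p (1,0) (1,0) + snd b *\<^sub>R IIc p (1,0) (0,1))
   + snd a *\<^sub>R (fst b *\<^sub>R IIc p (0,1) (1,0) + snd b *\<^sub>R IIc p (0,1) (0,1))"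
  unfolding IIc_def by (subst exp2, assumption) (simp add: nproj_add nproj_scale)

lemma mink_nproj_any: "p \<in> U \<Longrightarrow> mink (nproj X p x) v = mink (nproj X p x) (nproj X p v)"
  by (metis mink_nproj_both mink_nproj_sym)

lemma zero_deriv:
  assumes "(f has_derivative f') (at p)" "p \<in> U" "\<And>q. q \<in> U \<Longrightarrow> f q = k"
  shows "f' c = 0"
proof -
  have "f' = (\<lambda>h. 0)"
    by (rule deriv_unique_open[OF assms(1) has_derivative_const opn assms(2)]) (use assms(3) in auto)
  then show ?thesis by simp
qed

end

locale nsurf = tsurf U X for U :: "(real \<times> real) set" and X :: "real \<times> real \<Rightarrow> 'n::finite mink" +
  fixes Z :: "'n mink" and W :: "real \<times> real \<Rightarrow> 'n mink"
  assumes Zunit: "mink Z Z = 1"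
    and cnd: "canonical_null_direction U X Z"
    and W_tan: "\<forall>p\<in>U. W p \<in> tangent_space X p"
    and W_null: "\<forall>p\<in>U. lightlike (W p)"
    and W_norm: "\<forall>p\<in>U. mink (tproj X p Z) (W p) = -1"
begin

definition tau :: "real \<times> real \<Rightarrow> real \<times> real" where "tau q = coord X q Z"
definition om :: "real \<times> real \<Rightarrow> real \<times> real" where "om q = coord X q (W q)"

lemma T_eq: "q \<in> U \<Longrightarrow> tproj X q Z = d1 X q (tau q)"
  by (simp add: tproj_eq tau_def)
lemma W_eq: "q \<in> U \<Longrightarrow> W q = d1 X q (om q)"
  using in_tangent W_tan om_def by auto
lemma N_eq: "q \<in> U \<Longrightarrow> nproj X q Z = Z - d1 X q (tau q)"
  by (simp add: nproj_def T_eq)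

lemma tt: "q \<in> U \<Longrightarrow> mink (d1 X q (tau q)) (d1 X q (tau q)) = 0"
  using cnd by (simp add: canonical_null_direction_def lightlike_def T_eq)
lemma ww: "q \<in> U \<Longrightarrow> mink (d1 X q (om q)) (d1 X q (om q)) = 0"
  using W_null by (simp add: lightlike_def W_eq)
lemma tw: "q \<in> U \<Longrightarrow> mink (d1 X q (tau q)) (d1 X q (om q)) = -1"
  using W_norm by (simp add: T_eq W_eq)
lemma tau_nz: "q \<in> U \<Longrightarrow> tau q \<noteq> 0"
  using cnd by (auto simp: canonical_null_direction_def lightlike_def T_eq d1_zero)

lemma coordF: "q \<in> U \<Longrightarrow> coord X q v = (- mink v (d1 X q (om q))) *\<^sub>R tau q + (- mink v (d1 X q (tau q))) *\<^sub>R om q"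
  by (rule coord_frame[OF _ tt ww tw])

definition sg :: "real \<times> real \<Rightarrow> real \<times> real" where
  "sg q = (mink Z (d1 X q (1,0)), mink Z (d1 X q (0,1)))"
definition nn :: "real \<times> real \<Rightarrow> real" where
  "nn q = fst (sg q) * fst (sg q) + snd (sg q) * snd (sg q)"
definition uu :: "real \<times> real \<Rightarrow> real \<times> real" where
  "uu q = (- 1 / nn q) *\<^sub>R sg q"
definition ome :: "real \<times> real \<Rightarrow> real \<times> real" where
  "ome q = uu q + (mink (d1 X q (uu q)) (d1 X q (uu q)) / 2) *\<^sub>R tau q"

lemma nn_nz: assumes q: "q \<in> U" shows "nn q \<noteq> 0"
proof
  assume "nn q = 0"
  then have "fst (sg q) = 0" "snd (sg q) = 0" unfolding nn_def
    by (metis add_nonneg_eq_0_iff mult_eq_0_iff zero_le_square)+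
  then have "tau q = 0" unfolding tau_def coord_expl sg_def by (simp add: mink_comm[of Z] zero_prod_def)
  then show False using tau_nz[OF q] by simp
qed

lemma mink_tau_d1: "q \<in> U \<Longrightarrow> mink (d1 X q (tau q)) (d1 X q a) = mink Z (d1 X q a)"
  unfolding tau_def by (rule mink_coord)

lemma om_eq: assumes q: "q \<in> U" shows "om q = ome q"
proof -
  have su: "mink (d1 X q (uu q)) (d1 X q (tau q)) = -1"
  proof -
    have "mink (d1 X q (uu q)) (d1 X q (tau q)) = mink Z (d1 X q (uu q))"
      using mink_tau_d1[OF q, of "uu q"] mink_comm by metis
    also have "\<dots> = fst (uu q) * fst (sg q) + snd (uu q) * snd (sg q)"
      by (subst lin1[OF q]) (simp add: sg_def)
    also have "\<dots> = -1" using nn_nz[OF q] by (simp add: uu_def nn_def[symmetric] field_simps)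
    finally show ?thesis .
  qed
  define k where "k = mink (d1 X q (uu q)) (d1 X q (om q))"
  have "uu q = (- k) *\<^sub>R tau q + om q"
    using coordF[OF q, of "d1 X q (uu q)"] su by (simp add: coord_d1[OF q] k_def)
  then have o: "om q = uu q + k *\<^sub>R tau q" by (simp add: algebra_simps)
  have "0 = mink (d1 X q (om q)) (d1 X q (om q))" using ww[OF q] by simp
  also have "\<dots> = mink (d1 X q (uu q)) (d1 X q (uu q)) + 2 * k * mink (d1 X q (uu q)) (d1 X q (tau q))
     + k * k * mink (d1 X q (tau q)) (d1 X q (tau q))"
    unfolding o d1_add[OF q] d1_scale[OF q] using mink_comm[of "d1 X q (tau q)" "d1 X q (uu q)"]
    by (simp add: algebra_simps)
  finally have "k = mink (d1 X q (uu q)) (d1 X q (uu q)) / 2" using su tt[OF q] by simp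
  then show ?thesis using o by (simp add: ome_def)
qed

lemma diff_tau: "p \<in> U \<Longrightarrow> tau differentiable (at p)"
  unfolding tau_def[abs_def] by (rule diff_coord) simp_all

lemma diff_ome: assumes p: "p \<in> U" shows "ome differentiable (at p)"
proof -
  have sg: "sg differentiable (at p)" unfolding sg_def[abs_def]
    by (intro derivative_intros p)
  have nn: "nn differentiable (at p)" unfolding nn_def[abs_def]
    by (intro derivative_intros sg)
  have uu: "uu differentiable (at p)" unfolding uu_def[abs_def]
    using nn_nz[OF p] by (intro derivative_intros nn sg) auto
  show ?thesis unfolding ome_def[abs_def]
    by (intro derivative_intros p uu diff_tau) simp
qed

end




context nsurf
begin

definition dtau where "dtau p = frechet_derivative tau (at p)"
definition dOm where "dOm p = frechet_derivative om (at p)"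
definition dT where "dT p c = d2 X p c (tau p) + d1 X p (dtau p c)"
definition dW where "dW p c = d2 X p c (om p) + d1 X p (dOm p c)"
definition kk where "kk p c = mink (nproj X p Z) (IIc p c (om p))"
definition GG where "GG p a b = coord X p (d2 X p a b)"

lemma has_tau: "p \<in> U \<Longrightarrow> (tau has_derivative dtau p) (at p)"
  unfolding dtau_def using diff_tau frechet_derivative_works by blast

lemma has_om: assumes p: "p \<in> U" shows "(om has_derivative dOm p) (at p)"
proof -
  obtain f' where "(ome has_derivative f') (at p)" using diff_ome[OF p] differentiable_def by blast
  then have "(om has_derivative f') (at p)"
    by (rule has_derivative_transform_within_open[OF _ opn p]) (simp add: om_eq)
  then show ?thesis unfolding dOm_def using frechet_derivative_at by metis
qed

lemma has_T: "p \<in> U \<Longrightarrow> ((\<lambda>q. d1 X q (tau q)) has_derivative dT p) (at p)"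
  unfolding dT_def[abs_def] by (rule D1V[OF _ has_tau])
lemma has_W: "p \<in> U \<Longrightarrow> ((\<lambda>q. d1 X q (om q)) has_derivative dW p) (at p)"
  unfolding dW_def[abs_def] by (rule D1V[OF _ has_om])

lemma F1: assumes p: "p \<in> U" shows "mink (dT p c) (d1 X p (tau p)) = 0"
proof -
  have "mink (dT p c) (d1 X p (tau p)) + mink (d1 X p (tau p)) (dT p c) = 0"
    by (rule zero_deriv[OF has_derivative_mink[OF has_T[OF p] has_T[OF p]] p, where k=0]) (simp add: tt)
  then show ?thesis using mink_comm[of "d1 X p (tau p)" "dT p c"] by simp
qed

lemma F2: assumes p: "p \<in> U" shows "mink (dW p c) (d1 X p (om p)) = 0"
proof -
  have "mink (dW p c) (d1 X p (om p)) + mink (d1 X p (om p)) (dW p c) = 0"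
    by (rule zero_deriv[OF has_derivative_mink[OF has_W[OF p] has_W[OF p]] p, where k=0]) (simp add: ww)
  then show ?thesis using mink_comm[of "d1 X p (om p)" "dW p c"] by simp
qed

lemma F3: assumes p: "p \<in> U" shows "mink (dT p c) (d1 X p (om p)) + mink (d1 X p (tau p)) (dW p c) = 0"
  by (rule zero_deriv[OF has_derivative_mink[OF has_T[OF p] has_W[OF p]] p, where k="-1"]) (simp add: tw)

lemma F4: assumes p: "p \<in> U" shows "mink (dT p c) (d1 X p a) = mink (nproj X p Z) (d2 X p c a)"
proof -
  have d: "((\<lambda>q. Z - d1 X q (tau q)) has_derivative (\<lambda>c. 0 - dT p c)) (at p)"
    by (intro has_derivative_diff has_derivative_const has_T p)
  have "mink (0 - dT p c) (d1 X p a) + mink (Z - d1 X p (tau p)) (d2 X p c a) = 0"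
    by (rule zero_deriv[OF has_derivative_mink[OF d dD1[OF p]] p, where k=0])
      (simp add: N_eq[symmetric] mink_nproj_d1)
  then show ?thesis by (simp add: N_eq[OF p])
qed

lemma mink_N_IIc: "p \<in> U \<Longrightarrow> mink (nproj X p Z) (IIc p a b) = mink (nproj X p Z) (d2 X p a b)"
  unfolding IIc_def using mink_nproj_any by metis

lemma aN: assumes p: "p \<in> U" shows "mink (nproj X p Z) (IIc p c (tau p)) = 0"
  using F4[OF p, of c "tau p"] F1[OF p, of c] mink_N_IIc[OF p] by simp

lemma dtau_eq: assumes p: "p \<in> U" shows "dtau p c = (- kk p c) *\<^sub>R tau p - GG p c (tau p)"
proof -
  have "d1 X p (dtau p c) = dT p c - d2 X p c (tau p)" by (simp add: dT_def)
  then have "dtau p c = coord X p (dT p c) - GG p c (tau p)"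
    by (metis coord_d1[OF p] coord_diff GG_def)
  moreover have "coord X p (dT p c) = (- kk p c) *\<^sub>R tau p"
  proof -
    have e: "mink (dT p c) (d1 X p (om p)) = kk p c"
      unfolding kk_def F4[OF p, of c "om p"] mink_N_IIc[OF p] ..
    show ?thesis unfolding coordF[OF p, of "dT p c"] e F1[OF p, of c] by simp
  qed
  ultimately show ?thesis by simp
qed

lemma dOm_eq: assumes p: "p \<in> U" shows "dOm p c = kk p c *\<^sub>R om p - GG p c (om p)"
proof -
  have "d1 X p (dOm p c) = dW p c - d2 X p c (om p)" by (simp add: dW_def)
  then have "dOm p c = coord X p (dW p c) - GG p c (om p)"
    by (metis coord_d1[OF p] coord_diff GG_def)
  moreover have "coord X p (dW p c) = kk p c *\<^sub>R om p"
  proof -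
    have e: "mink (dT p c) (d1 X p (om p)) = kk p c"
      unfolding kk_def F4[OF p, of c "om p"] mink_N_IIc[OF p] ..
    have e2: "mink (dW p c) (d1 X p (tau p)) = - kk p c"
      using F3[OF p, of c] mink_comm[of "d1 X p (tau p)" "dW p c"] e by linarith
    show ?thesis unfolding coordF[OF p, of "dW p c"] e2 F2[OF p, of c] by simp
  qed
  ultimately show ?thesis by simp
qed

lemma half_lemma: "(1/2::real) *\<^sub>R (A + B + (B + C)) = (1/2) *\<^sub>R A + B + (1/2) *\<^sub>R (C::'a::real_vector)"
proof -
  have "(1/2::real) *\<^sub>R (A + B + (B + C)) = (1/2) *\<^sub>R A + (1/2::real) *\<^sub>R (2 *\<^sub>R B) + (1/2) *\<^sub>R C"
    by (simp add: scaleR_2 scaleR_add_right algebra_simps)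
  then show ?thesis by simp
qed

lemma H_eq: assumes q: "q \<in> U" shows "Hvec X q = - IIc q (tau q) (om q)"
proof -
  note gf = ginv_frame[OF q tt[OF q] ww[OF q] tw[OF q]]
  have ii: "II X q (ctan X q i) (ctan X q j) = IIc q (ebasis i) (ebasis j)" for i j
    by (simp add: II_eq ctan_def d1_def[symmetric] coord_d1[OF q])
  have s: "IIc q (0,1) (1,0) = IIc q (1,0) (0,1)" using IIc_sym[OF q] by blast
  define t1 where "t1 = fst (tau q)"
  define t2 where "t2 = snd (tau q)"
  define w1 where "w1 = fst (om q)"
  define w2 where "w2 = snd (om q)"
  define h00 where "h00 = IIc q (1,0) (1,0)"
  define h01 where "h01 = IIc q (1,0) (0,1)"
  define h11 where "h11 = IIc q (0,1) (0,1)"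
  have "Hvec X q = (1/2) *\<^sub>R ((-2 * t1 * w1) *\<^sub>R h00 + (- (t1 * w2 + t2 * w1)) *\<^sub>R h01
      + ((- (t1 * w2 + t2 * w1)) *\<^sub>R h01 + (-2 * t2 * w2) *\<^sub>R h11))"
    unfolding Hvec_def sum2 ii
    by (simp only: ebasis_def gf s if_True if_False one_neq_zero simp_thms t1_def t2_def w1_def w2_def h00_def h01_def h11_def
        add.assoc)
  also have "\<dots> = (1/2 * (-2 * t1 * w1)) *\<^sub>R h00 + (- (t1 * w2 + t2 * w1)) *\<^sub>R h01 + (1/2 * (-2 * t2 * w2)) *\<^sub>R h11"
    by (simp only: half_lemma scaleR_scaleR)
  also have "\<dots> = - IIc q (tau q) (om q)"
    unfolding IIc_exp[OF q, of "tau q" "om q"] t1_def[symmetric] t2_def[symmetric] w1_def[symmetric] w2_def[symmetric]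
      h00_def[symmetric] h01_def[symmetric] h11_def[symmetric] s
    by (simp add: algebra_simps)
  finally show ?thesis .
qed

end




context nsurf
begin

lemma HD: assumes p: "p \<in> U"
  obtains FH where "(Hvec X has_derivative FH) (at p)"
    "\<And>c. nproj X p (FH c) = nproj X p (- (d3 X p c (tau p) (om p) + d2 X p (dtau p c) (om p) + d2 X p (tau p) (dOm p c)))
        - nproj X p (d2 X p c (coord X p (- d2 X p (tau p) (om p))))"
proof -
  have b: "((\<lambda>q. - d2 X q (tau q) (om q)) has_derivative
      (\<lambda>c. - (d3 X p c (tau p) (om p) + d2 X p (dtau p c) (om p) + d2 X p (tau p) (dOm p c)))) (at p)"
    by (intro has_derivative_minus D2V p has_tau has_om)
  obtain F' where F': "((\<lambda>q. nproj X q (- d2 X q (tau q) (om q))) has_derivative F') (at p)"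
    "\<And>c. nproj X p (F' c) = nproj X p (- (d3 X p c (tau p) (om p) + d2 X p (dtau p c) (om p) + d2 X p (tau p) (dOm p c)))
        - nproj X p (d2 X p c (coord X p (- d2 X p (tau p) (om p))))"
    using DNP[OF p b] by blast
  have "(Hvec X has_derivative F') (at p)"
    by (rule has_derivative_transform_within_open[OF F'(1) opn p])
      (simp add: H_eq IIc_def nproj_minus)
  then show ?thesis using that F'(2) by blast
qed

lemma nabla_eq: "nabla_perp X F p v = nproj X p (frechet_derivative F (at p) (coord X p v))"
  by (simp add: nabla_perp_def dirD_def)

lemma H_normal: "p \<in> U \<Longrightarrow> mink (Hvec X p) (d1 X p a) = 0"
  by (simp add: H_eq IIc_def mink_nproj_d1)

lemma claim2: assumes p: "p \<in> U"
  shows "mink (Hvec X p) (Hvec X p) = - mink (nabla_perp X (Hvec X) p (W p)) (nproj X p Z)"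
proof -
  obtain FH where FH: "(Hvec X has_derivative FH) (at p)" and _: "\<And>c. nproj X p (FH c) = nproj X p (- (d3 X p c (tau p) (om p) + d2 X p (dtau p c) (om p) + d2 X p (tau p) (dOm p c)))
        - nproj X p (d2 X p c (coord X p (- d2 X p (tau p) (om p))))"
    using HD[OF p] by blast
  have fd: "frechet_derivative (Hvec X) (at p) = FH" using FH frechet_derivative_at by metis
  have dN: "((\<lambda>q. Z - d1 X q (tau q)) has_derivative (\<lambda>c. 0 - dT p c)) (at p)"
    by (intro has_derivative_diff has_derivative_const has_T p)
  have z: "mink (FH (om p)) (Z - d1 X p (tau p)) + mink (Hvec X p) (0 - dT p (om p)) = 0"
  proof (rule zero_deriv[OF has_derivative_mink[OF FH dN] p, where k=0])
    fix q assume q: "q \<in> U"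
    have "mink (Hvec X q) (Z - d1 X q (tau q)) = - mink (nproj X q Z) (IIc q (om q) (tau q))"
      by (simp add: H_eq[OF q] N_eq[OF q, symmetric] IIc_sym[OF q, of "tau q"] mink_comm[of "IIc q (om q) (tau q)"])
    also have "\<dots> = 0" using aN[OF q] by simp
    finally show "mink (Hvec X q) (Z - d1 X q (tau q)) = 0" .
  qed
  have hT: "mink (Hvec X p) (dT p (om p)) = - mink (Hvec X p) (Hvec X p)"
  proof -
    have "mink (Hvec X p) (dT p (om p)) = mink (Hvec X p) (d2 X p (om p) (tau p))"
      by (simp add: dT_def H_normal[OF p])
    also have "\<dots> = mink (Hvec X p) (IIc p (om p) (tau p))"
      unfolding H_eq[OF p] IIc_def nproj_minus[OF p, symmetric] using mink_nproj_any[OF p] by metis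
    also have "\<dots> = - mink (Hvec X p) (Hvec X p)"
      by (simp add: IIc_sym[OF p, of "om p"] H_eq[OF p])
    finally show ?thesis .
  qed
  have "mink (nabla_perp X (Hvec X) p (W p)) (nproj X p Z) = mink (FH (om p)) (Z - d1 X p (tau p))"
    unfolding nabla_eq fd om_def[symmetric] mink_nproj_both[OF p] by (simp add: N_eq[OF p])
  then show ?thesis using z hT by simp
qed

lemma kk_tau: "p \<in> U \<Longrightarrow> kk p (tau p) = 0"
  unfolding kk_def using aN IIc_sym by metis

lemma claim1: assumes p: "p \<in> U"
  shows "nabla_perp X (Hvec X) p (W p) = - nabla_perp X (\<lambda>q. II X q (W q) (W q)) p (tproj X p Z)"
proof -
  obtain FH where FH: "(Hvec X has_derivative FH) (at p)" and FHe: "\<And>c. nproj X p (FH c) = nproj X p (- (d3 X p c (tau p) (om p) + d2 X p (dtau p c) (om p) + d2 X p (tau p) (dOm p c)))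
        - nproj X p (d2 X p c (coord X p (- d2 X p (tau p) (om p))))"
    using HD[OF p] by blast
  have fd: "frechet_derivative (Hvec X) (at p) = FH" using FH frechet_derivative_at by metis
  have b: "((\<lambda>q. d2 X q (om q) (om q)) has_derivative
      (\<lambda>c. d3 X p c (om p) (om p) + d2 X p (dOm p c) (om p) + d2 X p (om p) (dOm p c))) (at p)"
    by (intro D2V p has_om)
  obtain F2 where F2: "((\<lambda>q. nproj X q (d2 X q (om q) (om q))) has_derivative F2) (at p)"
    "\<And>c. nproj X p (F2 c) = nproj X p (d3 X p c (om p) (om p) + d2 X p (dOm p c) (om p) + d2 X p (om p) (dOm p c))
        - nproj X p (d2 X p c (coord X p (d2 X p (om p) (om p))))"
    using DNP[OF p b] by blast
  have "((\<lambda>q. II X q (W q) (W q)) has_derivative F2) (at p)"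
    by (rule has_derivative_transform_within_open[OF F2(1) opn p])
      (simp add: II_eq IIc_def om_def)
  then have fd2: "frechet_derivative (\<lambda>q. II X q (W q) (W q)) (at p) = F2" using frechet_derivative_at by metis
  have ct: "coord X p (tproj X p Z) = tau p" by (simp add: T_eq[OF p] coord_d1[OF p])
  define A where "A = tau p"
  define B where "B = om p"
  define G where "G = GG p A B"
  define GB where "GB = GG p B B"
  have GBA: "GG p B A = G" by (simp add: G_def GG_def sym2[OF p, of B A])
  have s3: "d3 X p B A B = d3 X p A B B" by (rule sym3[OF p])
  have s2: "d2 X p G B = d2 X p B G" by (rule sym2[OF p])
  have cA: "coord X p (- d2 X p A B) = - G" by (simp add: G_def GG_def)
  have cB: "coord X p (d2 X p B B) = GB" by (simp add: GB_def GG_def)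
  have dtB: "dtau p B = (- kk p B) *\<^sub>R A - G" using dtau_eq[OF p, of B] GBA by (simp add: A_def)
  have doB: "dOm p B = kk p B *\<^sub>R B - GB" using dOm_eq[OF p, of B] by (simp add: B_def GB_def)
  have doA: "dOm p A = - G" using dOm_eq[OF p, of A] kk_tau[OF p] by (simp add: A_def B_def G_def)
  note lin = d2_add1[OF p] d2_add2[OF p] d2_diff1[OF p] d2_diff2[OF p] d2_scale1[OF p] d2_scale2[OF p]
    d2_minus1[OF p] d2_minus2[OF p] nproj_add[OF p] nproj_diff[OF p] nproj_scale[OF p] nproj_minus[OF p]
  have L: "nabla_perp X (Hvec X) p (W p) =
     - nproj X p (d3 X p A B B) + nproj X p (d2 X p B G) + nproj X p (d2 X p A GB) + nproj X p (d2 X p B G)"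
    unfolding nabla_eq fd om_def[symmetric] FHe A_def[symmetric] B_def[symmetric] cA dtB doB
    by (simp add: lin s3 s2 algebra_simps)
  have R: "nabla_perp X (\<lambda>q. II X q (W q) (W q)) p (tproj X p Z) =
     nproj X p (d3 X p A B B) - nproj X p (d2 X p B G) - nproj X p (d2 X p B G) - nproj X p (d2 X p A GB)"
    unfolding nabla_eq fd2 ct F2(2) A_def[symmetric] B_def[symmetric] cB doA
    by (simp add: lin s2 algebra_simps)
  show ?thesis unfolding L R by (simp add: algebra_simps)
qed

end




definition cmpk :: "nat \<Rightarrow> real \<times> real \<Rightarrow> real" where
  "cmpk k v = (if k = 0 then fst v else snd v)"

context tsurf
begin

definition Gm where "Gm q a b = coord X q (d2 X q a b)"

lemma metric_d1: "metric X q j l = mink (d1 X q (ebasis j)) (d1 X q (ebasis l))"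
  by (simp add: metric_def ctan_def d1_def)

lemma dmetric_eq: assumes q: "q \<in> U"
  shows "dmetric X q i j l = mink (d2 X q (ebasis i) (ebasis j)) (d1 X q (ebasis l))
     + mink (d1 X q (ebasis j)) (d2 X q (ebasis i) (ebasis l))"
proof -
  have "((\<lambda>q. metric X q j l) has_derivative
     (\<lambda>c. mink (d2 X q c (ebasis j)) (d1 X q (ebasis l)) + mink (d1 X q (ebasis j)) (d2 X q c (ebasis l)))) (at q)"
    unfolding metric_d1 by (rule has_derivative_mink[OF dD1[OF q] dD1[OF q]])
  then have "frechet_derivative (\<lambda>q. metric X q j l) (at q) =
     (\<lambda>c. mink (d2 X q c (ebasis j)) (d1 X q (ebasis l)) + mink (d1 X q (ebasis j)) (d2 X q c (ebasis l)))"
    by (rule frechet_derivative_at[symmetric])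
  then show ?thesis unfolding dmetric_def by simp
qed

lemma chr: assumes q: "q \<in> U" and k: "k < 2"
  shows "christoffel X q k i j = cmpk k (Gm q (ebasis i) (ebasis j))"
proof -
  have s: "\<And>a b. d2 X q a b = d2 X q b a" using sym2[OF q] .
  have m: "dmetric X q i j l + dmetric X q j i l - dmetric X q l i j
      = 2 * mink (d2 X q (ebasis i) (ebasis j)) (d1 X q (ebasis l))" for l
    unfolding dmetric_eq[OF q]
    using s[of "ebasis j" "ebasis i"] s[of "ebasis l" "ebasis i"] s[of "ebasis l" "ebasis j"]
      mink_comm[of "d1 X q (ebasis i)" "d2 X q (ebasis j) (ebasis l)"]
      mink_comm[of "d1 X q (ebasis j)" "d2 X q (ebasis i) (ebasis l)"]
    by simp
  have "christoffel X q k i j = (\<Sum>l<2. ginv X q k l * mink (d2 X q (ebasis i) (ebasis j)) (d1 X q (ebasis l)))"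
    unfolding christoffel_def m by (simp add: sum_distrib_left)
  also have "\<dots> = cmpk k (Gm q (ebasis i) (ebasis j))"
    using k unfolding Gm_def coord_expl cmpk_def sum2
    by (cases k) (auto simp: ebasis_def)
  finally show ?thesis .
qed

lemma Gm_lin2: "p \<in> U \<Longrightarrow> Gm p a b = fst b *\<^sub>R Gm p a (1,0) + snd b *\<^sub>R Gm p a (0,1)"
  unfolding Gm_def by (subst lin2b, assumption) simp

lemma diff_Gm: "p \<in> U \<Longrightarrow> (\<lambda>q. Gm q a b) differentiable (at p)"
  unfolding Gm_def by (intro diff_coord diff_d2) simp_all

lemma RelD: assumes p: "p \<in> U" and g: "((\<lambda>q. Gm q a b) has_derivative g') (at p)"
  shows "mink (d1 X p (g' c)) (d1 X p e) = mink (d3 X p c a b) (d1 X p e) + mink (d2 X p a b) (d2 X p c e)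
     - mink (d2 X p c (Gm p a b)) (d1 X p e) - mink (d1 X p (Gm p a b)) (d2 X p c e)"
proof -
  have "(mink (d2 X p c (Gm p a b) + d1 X p (g' c)) (d1 X p e) + mink (d1 X p (Gm p a b)) (d2 X p c e))
      - (mink (d3 X p c a b) (d1 X p e) + mink (d2 X p a b) (d2 X p c e)) = 0"
  proof (rule zero_deriv[OF has_derivative_diff[OF has_derivative_mink[OF D1V[OF p g] dD1[OF p]]
          has_derivative_mink[OF dD2[OF p] dD1[OF p]]] p, where k=0])
    fix q assume q: "q \<in> U"
    show "mink (d1 X q (Gm q a b)) (d1 X q e) - mink (d2 X q a b) (d1 X q e) = 0"
      unfolding Gm_def by (simp add: mink_coord[OF q])
  qed
  then show ?thesis by (simp add: algebra_simps)
qed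


lemma cmpk_add: "cmpk l (a + b) = cmpk l a + cmpk l b" by (simp add: cmpk_def)
lemma cmpk_diff: "cmpk l (a - b) = cmpk l a - cmpk l b" by (simp add: cmpk_def)
lemma cmpk_scale: "cmpk l (c *\<^sub>R a) = c * cmpk l a" by (simp add: cmpk_def)

lemma has_cmpk: "(f has_derivative f') F \<Longrightarrow> ((\<lambda>q. cmpk l (f q)) has_derivative (\<lambda>c. cmpk l (f' c))) F"
  unfolding cmpk_def by (cases "l = 0") (auto intro: has_derivative_fst has_derivative_snd)

lemma dchr: assumes p: "p \<in> U" and l: "l < 2"
  shows "frechet_derivative (\<lambda>q. christoffel X q l i j) (at p) =
     (\<lambda>c. cmpk l (frechet_derivative (\<lambda>q. Gm q (ebasis i) (ebasis j)) (at p) c))"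
proof -
  have "((\<lambda>q. Gm q (ebasis i) (ebasis j)) has_derivative frechet_derivative (\<lambda>q. Gm q (ebasis i) (ebasis j)) (at p)) (at p)"
    using diff_Gm[OF p] frechet_derivative_works by blast
  from has_cmpk[OF this, of l]
  have "((\<lambda>q. christoffel X q l i j) has_derivative
      (\<lambda>c. cmpk l (frechet_derivative (\<lambda>q. Gm q (ebasis i) (ebasis j)) (at p) c))) (at p)"
    by (rule has_derivative_transform_within_open[OF _ opn p]) (simp add: chr[OF _ l])
  then show ?thesis by (rule frechet_derivative_at[symmetric])
qed

lemma minus_coord: assumes p: "p \<in> U"
  shows "mink u w - mink (d1 X p (coord X p u)) w = mink (nproj X p u) (nproj X p w)"
proof -
  have "mink (d1 X p (coord X p u)) w = mink (d1 X p (coord X p u)) (d1 X p (coord X p w))"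
    using mink_coord[OF p, of w "coord X p u"] mink_comm by metis
  then show ?thesis using mink_decomp[OF p, of u w] by simp
qed

lemma gauss: assumes p: "p \<in> U"
  shows "gdet X p * gaussK X p = mink (IIc p (0,1) (0,1)) (IIc p (1,0) (1,0)) - mink (IIc p (1,0) (0,1)) (IIc p (1,0) (0,1))"
proof -
  define e0 where "e0 = ((1::real), (0::real))"
  define e1 where "e1 = ((0::real), (1::real))"
  have eb: "ebasis 0 = e0" "ebasis (Suc 0) = e1" "ebasis 1 = e1" by (simp_all add: ebasis_def e0_def e1_def)
  define g11' where "g11' = frechet_derivative (\<lambda>q. Gm q e1 e1) (at p)"
  define g01' where "g01' = frechet_derivative (\<lambda>q. Gm q e0 e1) (at p)"
  have h11: "((\<lambda>q. Gm q e1 e1) has_derivative g11') (at p)"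
    unfolding g11'_def using diff_Gm[OF p] frechet_derivative_works by blast
  have h01: "((\<lambda>q. Gm q e0 e1) has_derivative g01') (at p)"
    unfolding g01'_def using diff_Gm[OF p] frechet_derivative_works by blast
  define Rv where "Rv = g11' e0 - g01' e1 + Gm p e0 (Gm p e1 e1) - Gm p e1 (Gm p e0 e1)"
  have R: "riemann X p l 0 1 1 = cmpk l Rv" if l: "l < 2" for l
  proof -
    have c: "christoffel X p k i j = cmpk k (Gm p (ebasis i) (ebasis j))" if "k < 2" for k i j
      using chr[OF p that] .
    have "riemann X p l 0 1 1 = cmpk l (g11' e0) - cmpk l (g01' e1)
      + (cmpk l (Gm p e0 e0) * cmpk 0 (Gm p e1 e1) - cmpk l (Gm p e1 e0) * cmpk 0 (Gm p e0 e1)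
       + (cmpk l (Gm p e0 e1) * cmpk 1 (Gm p e1 e1) - cmpk l (Gm p e1 e1) * cmpk 1 (Gm p e0 e1)))"
    proof -
      have c0: "christoffel X p 0 i j = cmpk 0 (Gm p (ebasis i) (ebasis j))" for i j using c[of 0] by simp
      have c1: "christoffel X p (Suc 0) i j = cmpk (Suc 0) (Gm p (ebasis i) (ebasis j))" for i j using c[of 1] by simp
      show ?thesis unfolding riemann_def dchr[OF p l] sum2 c[OF l]
        by (simp add: eb g11'_def g01'_def c0 c1)
    qed
    also have "\<dots> = cmpk l Rv"
      unfolding Rv_def cmpk_add cmpk_diff Gm_lin2[OF p, of e0 "Gm p e1 e1"] Gm_lin2[OF p, of e1 "Gm p e0 e1"] cmpk_scale
      by (simp add: cmpk_def e0_def e1_def algebra_simps)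
    finally show ?thesis .
  qed
  have S: "(\<Sum>l<2. riemann X p l 0 1 1 * metric X p l 0) = mink (d1 X p Rv) (d1 X p e0)"
  proof -
    have R0: "riemann X p 0 0 (Suc 0) (Suc 0) = fst Rv" using R[of 0] by (simp add: cmpk_def)
    have R1: "riemann X p (Suc 0) 0 (Suc 0) (Suc 0) = snd Rv" using R[of 1] by (simp add: cmpk_def)
    show ?thesis unfolding sum2 metric_d1 eb lin1[OF p, of Rv]
      by (simp add: R0 R1 e0_def e1_def)
  qed
  have mG: "mink (d1 X p (Gm p a b)) (d1 X p e) = mink (d2 X p a b) (d1 X p e)" for a b e
    unfolding Gm_def by (rule mink_coord[OF p])
  have r1: "mink (d1 X p (g11' e0)) (d1 X p e0) = mink (d3 X p e0 e1 e1) (d1 X p e0) + mink (d2 X p e1 e1) (d2 X p e0 e0)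
     - mink (d2 X p e0 (Gm p e1 e1)) (d1 X p e0) - mink (d1 X p (Gm p e1 e1)) (d2 X p e0 e0)"
    by (rule RelD[OF p h11])
  have r2: "mink (d1 X p (g01' e1)) (d1 X p e0) = mink (d3 X p e1 e0 e1) (d1 X p e0) + mink (d2 X p e0 e1) (d2 X p e1 e0)
     - mink (d2 X p e1 (Gm p e0 e1)) (d1 X p e0) - mink (d1 X p (Gm p e0 e1)) (d2 X p e1 e0)"
    by (rule RelD[OF p h01])
  have s3: "d3 X p e1 e0 e1 = d3 X p e0 e1 e1" by (rule sym3[OF p])
  have q1: "mink (d2 X p e1 e1) (d2 X p e0 e0) - mink (d1 X p (Gm p e1 e1)) (d2 X p e0 e0)
      = mink (IIc p e1 e1) (IIc p e0 e0)"
    unfolding Gm_def IIc_def by (rule minus_coord[OF p])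
  have q2: "mink (d2 X p e0 e1) (d2 X p e1 e0) - mink (d1 X p (Gm p e0 e1)) (d2 X p e1 e0)
      = mink (IIc p e0 e1) (IIc p e0 e1)"
    unfolding Gm_def IIc_def minus_coord[OF p] using sym2[OF p, of e1 e0] by simp
  have md: "mink (d1 X p Rv) (d1 X p e0) = mink (d1 X p (g11' e0)) (d1 X p e0) - mink (d1 X p (g01' e1)) (d1 X p e0)
     + mink (d2 X p e0 (Gm p e1 e1)) (d1 X p e0) - mink (d2 X p e1 (Gm p e0 e1)) (d1 X p e0)"
    unfolding Rv_def d1_add[OF p] d1_diff[OF p] by (simp add: mG)
  have "(\<Sum>l<2. riemann X p l 0 1 1 * metric X p l 0) = mink (IIc p e1 e1) (IIc p e0 e0) - mink (IIc p e0 e1) (IIc p e0 e1)"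
    unfolding S md r1 r2 s3 using q1 q2 by simp
  then show ?thesis unfolding gaussK_def using gnz[OF p] by (simp add: e0_def e1_def)
qed

end




context nsurf
begin

lemma bil_id: assumes p: "p \<in> U"
  shows "mink (IIc p a a) (IIc p b b) - mink (IIc p a b) (IIc p a b)
    = (fst a * snd b - snd a * fst b)^2 * (mink (IIc p (1,0) (1,0)) (IIc p (0,1) (0,1)) - mink (IIc p (1,0) (0,1)) (IIc p (1,0) (0,1)))"
proof -
  define h00 where "h00 = IIc p (1,0) (1,0)"
  define h01 where "h01 = IIc p (1,0) (0,1)"
  define h11 where "h11 = IIc p (0,1) (0,1)"
  have s: "IIc p (0,1) (1,0) = h01" using IIc_sym[OF p] h01_def by metis
  define A where "A = mink h00 h00"
  define B where "B = mink h00 h01"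
  define C where "C = mink h00 h11"
  define E where "E = mink h01 h01"
  define F where "F = mink h01 h11"
  define G where "G = mink h11 h11"
  have c1: "mink h01 h00 = B" unfolding B_def by (rule mink_comm)
  have c2: "mink h11 h00 = C" unfolding C_def by (rule mink_comm)
  have c3: "mink h11 h01 = F" unfolding F_def by (rule mink_comm)
  obtain a1 a2 where a: "a = (a1, a2)" by (cases a)
  obtain b1 b2 where b: "b = (b1, b2)" by (cases b)
  show ?thesis
    unfolding a b IIc_exp[OF p, of "(a1,a2)" "(a1,a2)"] IIc_exp[OF p, of "(b1,b2)" "(b1,b2)"] IIc_exp[OF p, of "(a1,a2)" "(b1,b2)"]
      h00_def[symmetric] h01_def[symmetric] h11_def[symmetric] s fst_conv snd_conv
    apply (simp only: mink_add_left mink_add_right mink_scaleR_left mink_scaleR_right c1 c2 c3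
        A_def[symmetric] B_def[symmetric] C_def[symmetric] E_def[symmetric] F_def[symmetric] G_def[symmetric])
    by algebra
qed

lemma claim3: assumes p: "p \<in> U"
  shows "gaussK X p = mink (Hvec X p) (Hvec X p) - mink (II X p (W p) (W p)) (II X p (tproj X p Z) (tproj X p Z))"
proof -
  have ct: "coord X p (tproj X p Z) = tau p" by (simp add: T_eq[OF p] coord_d1[OF p])
  have iw: "II X p (W p) (W p) = IIc p (om p) (om p)" by (simp add: II_eq om_def)
  have it: "II X p (tproj X p Z) (tproj X p Z) = IIc p (tau p) (tau p)" by (simp add: II_eq ct)
  note gf = ginv_frame[OF p tt[OF p] ww[OF p] tw[OF p]]
  define dd where "dd = (fst (tau p) * snd (om p) - snd (tau p) * fst (om p))^2"
  have d: "dd * gdet X p = -1" using gf(5) by (simp add: dd_def)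
  have g: "gdet X p * gaussK X p = mink (IIc p (1,0) (1,0)) (IIc p (0,1) (0,1)) - mink (IIc p (1,0) (0,1)) (IIc p (1,0) (0,1))"
    using gauss[OF p] mink_comm[of "IIc p (0,1) (0,1)" "IIc p (1,0) (1,0)"] by simp
  have b: "mink (IIc p (tau p) (tau p)) (IIc p (om p) (om p)) - mink (IIc p (tau p) (om p)) (IIc p (tau p) (om p))
     = dd * (gdet X p * gaussK X p)"
    unfolding g dd_def by (rule bil_id[OF p])
  have "dd * (gdet X p * gaussK X p) = (dd * gdet X p) * gaussK X p" by (simp only: mult.assoc)
  then have "gaussK X p = - (dd * (gdet X p * gaussK X p))" using d by simp
  also have "\<dots> = mink (IIc p (tau p) (om p)) (IIc p (tau p) (om p)) - mink (IIc p (tau p) (tau p)) (IIc p (om p) (om p))"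
    using b by simp
  finally show ?thesis unfolding iw it H_eq[OF p]
    using mink_comm[of "IIc p (tau p) (tau p)" "IIc p (om p) (om p)"] by simp
qed

end



theorem mainTheorem6:
  fixes X :: "real \<times> real \<Rightarrow> 'n::finite mink"
    and U :: "(real \<times> real) set"
    and Z :: "'n mink"
    and W :: "real \<times> real \<Rightarrow> 'n mink"
  assumes surf: "timelike_surface U X"
    and Zunit: "mink Z Z = 1"
    and cnd: "canonical_null_direction U X Z"
    and W_tan: "\<forall>p\<in>U. W p \<in> tangent_space X p"
    and W_null: "\<forall>p\<in>U. lightlike (W p)"
    and W_norm: "\<forall>p\<in>U. mink (tproj X p Z) (W p) = -1"
  shows "\<forall>p\<in>U.
      nabla_perp X (Hvec X) p (W p) =
        - nabla_perp X (\<lambda>q. II X q (W q) (W q)) p (tproj X p Z)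
    \<and> mink (Hvec X p) (Hvec X p) =
        - mink (nabla_perp X (Hvec X) p (W p)) (nproj X p Z)
    \<and> gaussK X p =
        mink (Hvec X p) (Hvec X p) - mink (II X p (W p) (W p)) (II X p (tproj X p Z) (tproj X p Z))"
proof -
  interpret nsurf U X Z W
    by (unfold_locales) (fact surf Zunit cnd W_tan W_null W_norm)+
  show ?thesis using claim1 claim2 claim3 by blast
qed

end
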